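(* Let $A\in\mathbb{R}^{n\times n}$ be symmetric with eigenvalues $\alpha_1\ge\cdots\ge\alpha_n$, $g\in\mathbb{R}^n$ nonzero, $\Delta>0$, and consider the TRS of minimizing $\frac12x^TAx+x^Tg$ subject to $\|x\|\le\Delta$, in the easy case. With the notation of the context, suppose $\|x_{opt}\|=\|x_k\|=\Delta$. Then $$\|(A+\lambda_kI)x_k+g\|\le2\min\{B_1,B_2\},$$ where $B_1=\|A_{opt}\|\sqrt{\Delta^2+\epsilon_k^2}\big(\frac{\sqrt\kappa-1}{\sqrt\kappa+1}\big)^k$ and $B_2=\beta_k\Delta\big(\frac{\sqrt{\kappa_k}-1}{\sqrt{\kappa_k}+1}\big)^{k-1}$.
   Context: All norms are Euclidean. $x_{opt}$ is a global minimizer of the TRS, $\lambda_{opt}\ge0$ its Lagrange multiplier ($(A+\lambda_{opt}I)x_{opt}=-g$, $\lambda_{opt}(\Delta-\|x_{opt}\|)=0$, $A+\lambda_{opt}I\succeq0$); easy case: $\lambda_{opt}>-\alpha_n$. $A_{opt}=A+\lambda_{opt}I$, $\kappa=(\alpha_1+\lambda_{opt})/(\alpha_n+\lambda_{opt})$. Lanczos on $A$ with starting vector $g$: $Q_k=[q_1,\ldots,q_k]$ orthonormal basis of $\mathcal{K}_k(A,g)=\mathrm{span}\{g,\ldots,A^{k-1}g\}$, $q_1=g/\|g\|$, $T_k=Q_k^TAQ_k$ tridiagonal, $AQ_k=Q_kT_k+\beta_kq_{k+1}e_k^T$. GLTR: $x_k=Q_kh_k$, $h_k$ minimizes $\frac12h^TT_kh+\|g\|h^Te_1$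 over $\|h\|\le\Delta$, multiplier $\lambda_k\ge0$ with $(T_k+\lambda_kI)h_k=-\|g\|e_1$, $\lambda_k(\Delta-\|h_k\|)=0$, $T_k+\lambda_kI\succ0$. $\kappa_k$ is the 2-condition number of $T_k+\lambda_kI$. $\epsilon_k=\|(I-Q_kQ_k^T)x_{opt}\|$. *)

theory Defs
  imports "HOL-Analysis.Analysis"
begin

definition eigvals :: "real^'n^'n \<Rightarrow> real set" where
  "eigvals A = {\<mu>. \<exists>v. v \<noteq> 0 \<and> A *v v = \<mu> *\<^sub>R v}"

definition trs_obj :: "real^'n^'n \<Rightarrow> real^'n \<Rightarrow> real^'n \<Rightarrow> real" where
  "trs_obj A g x = (1/2) * (x \<bullet> (A *v x)) + x \<bullet> g"

definition krylov :: "real^'n^'n \<Rightarrow> real^'n \<Rightarrow> nat \<Rightarrow> (real^'n) set" where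
  "krylov A g m = span {((\<lambda>x. A *v x) ^^ j) g | j. j < m}"

(* vectors in R^k represented as nat => real, components indexed 1..k *)
definition vnorm :: "nat \<Rightarrow> (nat \<Rightarrow> real) \<Rightarrow> real" where
  "vnorm k v = sqrt (\<Sum>i=1..k. (v i)^2)"

(* k x k matrices represented as nat => nat => real, entries indexed 1..k *)
definition mvec :: "nat \<Rightarrow> (nat \<Rightarrow> nat \<Rightarrow> real) \<Rightarrow> (nat \<Rightarrow> real) \<Rightarrow> (nat \<Rightarrow> real)" where
  "mvec k M v = (\<lambda>i. \<Sum>j=1..k. M i j * v j)"

definition cond2 :: "nat \<Rightarrow> (nat \<Rightarrow> nat \<Rightarrow> real) \<Rightarrow> real" where
  "cond2 k M = (SUP v\<in>{v. vnorm k v = 1}. vnorm k (mvec k M v))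
             / (INF v\<in>{v. vnorm k v = 1}. vnorm k (mvec k M v))"

definition gltr_obj :: "nat \<Rightarrow> (nat \<Rightarrow> nat \<Rightarrow> real) \<Rightarrow> real \<Rightarrow> (nat \<Rightarrow> real) \<Rightarrow> real" where
  "gltr_obj k T gn h = (1/2) * (\<Sum>i=1..k. \<Sum>j=1..k. h i * T i j * h j) + gn * h 1"

end

theory Submission
  imports Defs "HOL-Computational_Algebra.Polynomial"
begin

definition pv :: "('a::real_vector \<Rightarrow> 'a) \<Rightarrow> real poly \<Rightarrow> 'a \<Rightarrow> 'a" where
  "pv F p x = (\<Sum>i\<le>degree p. coeff p i *\<^sub>R (F ^^ i) x)"

lemma pv_bigger: "degree p \<le> N \<Longrightarrow> pv F p x = (\<Sum>i\<le>N. coeff p i *\<^sub>R (F ^^ i) x)"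
  unfolding pv_def
  by (rule sum.mono_neutral_left) (auto simp: coeff_eq_0)

lemma pv_add: "pv F (p + q) x = pv F p x + pv F q x"
proof -
  let ?N = "max (degree p) (degree q)"
  have "degree (p+q) \<le> ?N" by (rule degree_add_le) auto
  then show ?thesis
    by (simp add: pv_bigger[of _ ?N] scaleR_add_left sum.distrib)
qed

lemma pv_smult: "pv F (smult a p) x = a *\<^sub>R pv F p x"
  by (simp add: pv_bigger[of "smult a p" "degree p"] pv_def scaleR_sum_right)

lemma pv_0[simp]: "pv F 0 x = 0"
  by (simp add: pv_def)

lemma pv_1[simp]: "pv F 1 x = x"
  by (simp add: pv_def)

lemma linear_funpow: "linear (F::'a::real_vector\<Rightarrow>'a) \<Longrightarrow> linear (F ^^ i)"
proof (induction i)
  case 0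
  show ?case by (rule linearI) (simp_all add: funpow.simps)
next
  case (Suc i)
  then show ?case unfolding funpow.simps(2) using linear_compose[of "F ^^ i" F] by (simp add: o_def)
qed

lemma pv_pCons:
  assumes "linear F"
  shows "pv F (pCons a p) x = a *\<^sub>R x + F (pv F p x)"
proof -
  have "degree (pCons a p) \<le> Suc (degree p)" by (simp add: degree_pCons_le)
  then have "pv F (pCons a p) x = (\<Sum>i\<le>Suc (degree p). coeff (pCons a p) i *\<^sub>R (F ^^ i) x)"
    by (rule pv_bigger)
  also have "\<dots> = a *\<^sub>R x + (\<Sum>i\<le>degree p. coeff p i *\<^sub>R F ((F ^^ i) x))"
    by (subst sum.atMost_Suc_shift) simp
  also have "(\<Sum>i\<le>degree p. coeff p i *\<^sub>R F ((F ^^ i) x)) = F (pv F p x)"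
    unfolding pv_def using assms by (simp add: linear_sum linear_scale)
  finally show ?thesis .
qed

lemma linear_pv: "linear F \<Longrightarrow> linear (pv F p)"
  unfolding pv_def
  by (intro linear_compose_sum) (auto intro!: linear_compose_scale_right linear_funpow)

lemma pv_mult:
  assumes "linear F"
  shows "pv F (p * q) x = pv F p (pv F q x)"
proof (induction p)
  case 0
  then show ?case by simp
next
  case (pCons a p)
  have "pCons a p * q = smult a q + pCons 0 (p * q)" by (simp add: mult_pCons_left)
  then show ?case
    using pCons assms by (simp add: pv_add pv_smult pv_pCons)
qed

lemma pv_X: "linear F \<Longrightarrow> pv F [:0,1:] x = F x"
  by (simp add: pv_pCons linear_0)

lemma pv_const: "pv F [:c:] x = c *\<^sub>R x"
  by (simp add: pv_def)

lemma pv_diff: "pv F (p - q) x = pv F p x - pv F q x"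
  using pv_add[of F "p - q" q x] by simp

lemma funpow_sym:
  fixes F :: "'a::real_inner \<Rightarrow> 'a"
  assumes "\<And>x y. F x \<bullet> y = x \<bullet> F y"
  shows "(F ^^ i) x \<bullet> y = x \<bullet> (F ^^ i) y"
  by (induction i arbitrary: x y) (auto simp: assms funpow_swap1)

lemma pv_sym:
  fixes F :: "'a::real_inner \<Rightarrow> 'a"
  assumes "\<And>x y. F x \<bullet> y = x \<bullet> F y"
  shows "pv F p x \<bullet> y = x \<bullet> pv F p y"
  unfolding pv_def by (simp add: inner_sum_left inner_sum_right funpow_sym[OF assms])

fun chebp :: "nat \<Rightarrow> real poly \<times> real poly" where
  "chebp 0 = (1, 0)"
| "chebp (Suc n) = ([:0,1:] * fst (chebp n) + [:-1,0,1:] * snd (chebp n),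
                    fst (chebp n) + [:0,1:] * snd (chebp n))"

lemma XX_eq: "[:0,1:] * [:0,1::real:] = [:-1,0,1:] + 1"
  by (simp add: one_pCons)

lemma cheb_pell:
  "fst (chebp n) * fst (chebp n) - [:-1,0,1:] * (snd (chebp n) * snd (chebp n)) = 1"
proof (induction n)
  case 0
  then show ?case by simp
next
  case (Suc n)
  obtain t u where tu: "chebp n = (t,u)" by fastforce
  have h: "t * t - [:-1,0,1:] * (u * u) = 1" using Suc tu by simp
  have "([:0,1:] * t + [:-1,0,1:] * u) * ([:0,1:] * t + [:-1,0,1:] * u)
        - [:-1,0,1:] * ((t + [:0,1:] * u) * (t + [:0,1:] * u)) = 1"
    using h XX_eq by algebra
  then show ?case using tu by simp
qed

lemma cheb_degree:
  "degree (fst (chebp n)) \<le> n \<and> (snd (chebp n) = 0 \<or> degree (snd (chebp n)) < n)"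
proof (induction n)
  case 0
  then show ?case by simp
next
  case (Suc n)
  obtain t u where tu: "chebp n = (t,u)" by fastforce
  have t: "degree t \<le> n" and u: "u = 0 \<or> degree u < n" using Suc tu by auto
  have dX: "degree ([:0,1::real:] * t) \<le> Suc n"
    using degree_mult_le[of "[:0,1::real:]" t] t by simp
  have dD: "degree ([:-1,0,1::real:] * u) \<le> Suc n"
  proof (cases "u = 0")
    case True then show ?thesis by simp
  next
    case False
    then have "degree u < n" using u by simp
    then show ?thesis using degree_mult_le[of "[:-1,0,1::real:]" u] by simp
  qed
  have d1: "degree ([:0,1:] * t + [:-1,0,1:] * u) \<le> Suc n"
    using degree_add_le[OF dX dD] .
  have dXu: "degree ([:0,1::real:] * u) \<le> n"
  proof (cases "u = 0")
    case True then show ?thesis by simp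
  next
    case False
    then have "degree u < n" using u by simp
    then show ?thesis using degree_mult_le[of "[:0,1::real:]" u] by simp
  qed
  have d2: "degree (t + [:0,1:] * u) \<le> n"
    using degree_add_le[OF t dXu] .
  show ?case using tu d1 d2 by simp
qed

lemma cheb_scalar:
  fixes s r :: real
  assumes rr: "r * r = s * s - 1"
  shows "poly (fst (chebp n)) s + r * poly (snd (chebp n)) s = (s + r) ^ n
       \<and> poly (fst (chebp n)) s - r * poly (snd (chebp n)) s = (s - r) ^ n"
proof (induction n)
  case 0
  then show ?case by simp
next
  case (Suc n)
  obtain t u where tu: "chebp n = (t,u)" by fastforce
  let ?t = "poly t s" and ?u = "poly u s"
  have ih1: "?t + r * ?u = (s + r) ^ n" and ih2: "?t - r * ?u = (s - r) ^ n"
    using Suc tu by auto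
  have e1: "(s * ?t + (s * s - 1) * ?u) + r * (?t + s * ?u) = (s + r) * (?t + r * ?u)"
    using rr by algebra
  have e2: "(s * ?t + (s * s - 1) * ?u) - r * (?t + s * ?u) = (s - r) * (?t - r * ?u)"
    using rr by algebra
  have p1: "poly ([:0,1:] * t + [:-1,0,1:] * u) s = s * ?t + (s * s - 1) * ?u"
    by (simp add: algebra_simps)
  have p2: "poly (t + [:0,1:] * u) s = ?t + s * ?u"
    by simp
  show ?case using tu e1 e2 ih1 ih2 p1 p2 by simp
qed

lemma psd_cs:
  fixes N :: "'a::real_inner \<Rightarrow> 'a"
  assumes lin: "linear N" and sym: "\<And>x y. N x \<bullet> y = x \<bullet> N y"
    and sub: "subspace V" and psd: "\<And>x. x \<in> V \<Longrightarrow> 0 \<le> x \<bullet> N x"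
    and uV: "u \<in> V" and wV: "w \<in> V"
  shows "(u \<bullet> N w)^2 \<le> (u \<bullet> N u) * (w \<bullet> N w)"
proof -
  let ?a = "u \<bullet> N u" and ?c = "u \<bullet> N w" and ?d = "w \<bullet> N w"
  have q: "0 \<le> ?a + 2 * t * ?c + t^2 * ?d" for t
  proof -
    have "u + t *\<^sub>R w \<in> V" using sub uV wV by (simp add: subspace_add subspace_scale)
    then have "0 \<le> (u + t *\<^sub>R w) \<bullet> N (u + t *\<^sub>R w)" by (rule psd)
    also have "\<dots> = ?a + 2 * t * ?c + t^2 * ?d"
    proof -
      have "w \<bullet> N u = ?c" using sym[of w u] by (simp add: inner_commute)
      then show ?thesis
        using lin by (simp add: linear_add linear_scale inner_add_left inner_add_right
            algebra_simps power2_eq_square)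
    qed
    finally show ?thesis .
  qed
  have d0: "0 \<le> ?d" using psd[OF wV] .
  show ?thesis
  proof (cases "?d = 0")
    case True
    have "?c = 0"
    proof (rule ccontr)
      assume "?c \<noteq> 0"
      have "0 \<le> ?a + 2 * (-(?a + 1) / (2 * ?c)) * ?c + (-(?a + 1) / (2 * ?c))^2 * ?d"
        by (rule q)
      also have "\<dots> = -1" using True \<open>?c \<noteq> 0\<close> by (simp add: field_simps)
      finally show False by simp
    qed
    then show ?thesis using True by simp
  next
    case False
    then have dp: "0 < ?d" using d0 by simp
    have "0 \<le> ?a + 2 * (-?c / ?d) * ?c + (-?c / ?d)^2 * ?d" by (rule q)
    also have "\<dots> = ?a - ?c^2 / ?d" using dp by (simp add: field_simps power2_eq_square)
    finally have "?c^2 / ?d \<le> ?a" by simp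
    then show ?thesis using dp by (simp add: field_simps mult.commute)
  qed
qed

lemma polar_norm:
  fixes G :: "'a::real_inner \<Rightarrow> 'a"
  assumes lin: "linear G" and sym: "\<And>x y. G x \<bullet> y = x \<bullet> G y"
    and bd: "\<And>y. \<bar>y \<bullet> G y\<bar> \<le> y \<bullet> y"
  shows "norm (G y) \<le> norm y"
proof -
  have key: "4 * (u \<bullet> G v) \<le> 2 * (u \<bullet> u) + 2 * (v \<bullet> v)" for u v
  proof -
    have e: "(u + v) \<bullet> G (u + v) - (u - v) \<bullet> G (u - v) = 4 * (u \<bullet> G v)"
    proof -
      have "v \<bullet> G u = u \<bullet> G v" using sym[of v u] by (simp add: inner_commute)
      then show ?thesis using lin
        by (simp add: linear_add linear_diff inner_add_left inner_add_right inner_diff_left inner_diff_right)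
    qed
    have "(u + v) \<bullet> G (u + v) \<le> (u+v) \<bullet> (u+v)" using bd[of "u+v"] by simp
    moreover have "-((u - v) \<bullet> G (u - v)) \<le> (u-v) \<bullet> (u-v)" using bd[of "u-v"] by simp
    ultimately have "4 * (u \<bullet> G v) \<le> (u+v) \<bullet> (u+v) + (u-v) \<bullet> (u-v)" using e by linarith
    also have "\<dots> = 2 * (u \<bullet> u) + 2 * (v \<bullet> v)"
      by (simp add: inner_add_left inner_add_right inner_diff_left inner_diff_right inner_commute)
    finally show ?thesis .
  qed
  let ?z = "G y"
  show ?thesis
  proof (cases "?z = 0 \<or> y = 0")
    case True
    then show ?thesis using lin by (auto simp: linear_0)
  next
    case False
    then have zp: "0 < norm ?z" and yp: "0 < norm y" by auto
    have k: "4 * ((norm ?z *\<^sub>R y) \<bullet> G (norm y *\<^sub>R ?z))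
          \<le> 2 * ((norm ?z *\<^sub>R y) \<bullet> (norm ?z *\<^sub>R y)) + 2 * ((norm y *\<^sub>R ?z) \<bullet> (norm y *\<^sub>R ?z))"
      by (rule key)
    have eA: "(norm ?z *\<^sub>R y) \<bullet> G (norm y *\<^sub>R ?z) = norm ?z * norm y * (norm ?z)^2"
    proof -
      have "y \<bullet> G ?z = ?z \<bullet> ?z" using sym[of y ?z] by (simp add: inner_commute)
      moreover have "G (norm y *\<^sub>R ?z) = norm y *\<^sub>R G ?z" using lin by (simp add: linear_scale)
      ultimately show ?thesis by (simp add: power2_norm_eq_inner)
    qed
    have eB: "(norm ?z *\<^sub>R y) \<bullet> (norm ?z *\<^sub>R y) = (norm ?z)^2 * (norm y)^2"
      by (simp add: power2_norm_eq_inner[symmetric] power2_eq_square)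
    have eC: "(norm y *\<^sub>R ?z) \<bullet> (norm y *\<^sub>R ?z) = (norm ?z)^2 * (norm y)^2"
      by (simp add: power2_norm_eq_inner[symmetric] power2_eq_square)
    have "4 * (norm ?z * norm y * (norm ?z)^2) \<le> 4 * ((norm ?z)^2 * (norm y)^2)"
      using k unfolding eA eB eC by linarith
    then have "(norm ?z * norm y * norm ?z) * norm ?z \<le> (norm ?z * norm y * norm ?z) * norm y"
      by (simp add: power2_eq_square ac_simps)
    moreover have "0 < norm ?z * norm y * norm ?z" using zp yp by simp
    ultimately show ?thesis by (simp add: mult_le_cancel_left_pos)
  qed
qed

lemma psd_zero:
  fixes N :: "'a::real_inner \<Rightarrow> 'a"
  assumes lin: "linear N" and sym: "\<And>x y. N x \<bullet> y = x \<bullet> N y"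
    and z: "\<And>x. x \<bullet> N x = 0"
  shows "N w = 0"
proof -
  have "(N w \<bullet> N w)^2 \<le> (N w \<bullet> N (N w)) * (w \<bullet> N w)"
    using psd_cs[OF lin sym, of UNIV "N w" w] z by (simp add: inner_commute)
  then have "(N w \<bullet> N w)^2 \<le> 0" using z by simp
  then show ?thesis by simp
qed

lemma exists_nonzero: "\<exists>x::'a::euclidean_space. x \<noteq> 0"
  using nonzero_Basis nonempty_Basis by blast

lemma cheb_bound:
  fixes F :: "'a::euclidean_space \<Rightarrow> 'a"
  assumes lin: "linear F" and sym: "\<And>x y. F x \<bullet> y = x \<bullet> F y"
    and apos: "0 < a"
    and lo: "\<And>x. a * (x \<bullet> x) \<le> x \<bullet> F x" and hi: "\<And>x. x \<bullet> F x \<le> b * (x \<bullet> x)"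
  shows "\<exists>S. degree S \<le> m \<and> poly S 0 = 1 \<and>
           (\<forall>x. norm (pv F S x) \<le> 2 * ((sqrt (b/a) - 1) / (sqrt (b/a) + 1)) ^ m * norm x)"
proof -
  obtain x0 :: 'a where x0: "x0 \<noteq> 0" using exists_nonzero by blast
  have "a * (x0 \<bullet> x0) \<le> b * (x0 \<bullet> x0)" using lo[of x0] hi[of x0] by linarith
  then have ab: "a \<le> b" using x0 by simp
  show ?thesis
  proof (cases "m = 0")
    case True
    then show ?thesis by (intro exI[of _ 1]) simp
  next
    case mpos: False
    show ?thesis
    proof (cases "a = b")
      case True
      have Fx: "F x = a *\<^sub>R x" for x
      proof -
        let ?N = "\<lambda>x. F x - a *\<^sub>R x"
        have "linear ?N" using lin by (intro linear_compose_sub linear_compose_scale_right) (auto simp: linear_ident)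
        moreover have "\<And>x y. ?N x \<bullet> y = x \<bullet> ?N y" using sym by (simp add: inner_diff_left inner_diff_right)
        moreover have "\<And>x. x \<bullet> ?N x = 0"
          using lo hi True by (simp add: inner_diff_right) (meson antisym)
        ultimately have "?N x = 0" by (rule psd_zero)
        then show ?thesis by simp
      qed
      let ?S = "[:1, -1/a:]"
      have "pv F ?S x = 0" for x
        using lin apos by (simp add: pv_pCons pv_const Fx linear_scale)
      moreover have "degree ?S \<le> m" using mpos by simp
      moreover have "poly ?S 0 = 1" by simp
      ultimately show ?thesis using True apos by (intro exI[of _ ?S]) simp
    next
      case False
      then have ab': "a < b" using ab by simp
      define \<kappa> where "\<kappa> = b / a"
      define s where "s = sqrt \<kappa>"
      define \<sigma> where "\<sigma> = (\<kappa> + 1) / (\<kappa> - 1)"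
      define r where "r = 2 * s / (\<kappa> - 1)"
      have k1: "1 < \<kappa>" using ab' apos by (simp add: \<kappa>_def)
      have s1: "1 < s" using k1 by (simp add: s_def)
      have ss: "s * s = \<kappa>" using k1 by (simp add: s_def)
      have km: "\<kappa> - 1 = (s - 1) * (s + 1)" using ss by (simp add: algebra_simps)
      have d: "\<kappa> - 1 \<noteq> 0" using k1 by simp
      have e1: "r * (\<kappa> - 1) = 2 * s" using d by (simp add: r_def)
      have e2: "\<sigma> * (\<kappa> - 1) = \<kappa> + 1" using d by (simp add: \<sigma>_def)
      have rr: "r * r = \<sigma> * \<sigma> - 1"
      proof -
        have "(r * r - (\<sigma> * \<sigma> - 1)) * ((\<kappa> - 1) * (\<kappa> - 1)) = 0"
          using e1 e2 ss by algebra
        then show ?thesis using d by simp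
      qed
      have sr_nonneg: "0 \<le> \<sigma> - r"
      proof -
        have "(\<sigma> - r) * (\<kappa> - 1) = (s - 1) * (s - 1)"
          using e1 e2 ss by algebra
        moreover have "0 \<le> (s - 1) * (s - 1)" by simp
        ultimately have "0 \<le> (\<sigma> - r) * (\<kappa> - 1)" by simp
        then show ?thesis using k1 by (simp add: zero_le_mult_iff)
      qed
      have spr: "\<sigma> + r = (s + 1) / (s - 1)"
      proof -
        have "((\<sigma> + r) * (s - 1) - (s + 1)) * (s + 1) = 0"
          using e1 e2 ss km by algebra
        then have "(\<sigma> + r) * (s - 1) = s + 1" using s1 by simp
        then show ?thesis using s1 by (simp add: field_simps)
      qed
      define \<rho> where "\<rho> = (s - 1) / (s + 1)"
      have rho_inv: "(\<sigma> + r) * \<rho> = 1" using s1 spr by (simp add: \<rho>_def)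
      have rho_nonneg: "0 \<le> \<rho>" using s1 by (simp add: \<rho>_def)
      have spr_pos: "0 < \<sigma> + r" using s1 spr by simp
      define L where "L = [:(a+b)/(b-a), -2/(b-a):]"
      have L0: "poly L 0 = \<sigma>"
        using apos ab' by (simp add: L_def \<sigma>_def \<kappa>_def field_simps)
      define G where "G = pv F L"
      have Gy: "G y = ((a+b)/(b-a)) *\<^sub>R y - (2/(b-a)) *\<^sub>R F y" for y
        using lin by (simp add: G_def L_def pv_pCons pv_const linear_scale linear_neg)
      have linG: "linear G" unfolding G_def by (rule linear_pv[OF lin])
      have symG: "\<And>x y. G x \<bullet> y = x \<bullet> G y" unfolding G_def by (rule pv_sym[OF sym])
      have bdG: "\<bar>y \<bullet> G y\<bar> \<le> y \<bullet> y" for y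
      proof -
        have e: "y \<bullet> G y = ((a+b) * (y \<bullet> y) - 2 * (y \<bullet> F y)) / (b - a)"
          by (simp add: Gy inner_diff_right diff_divide_distrib)
        have "(a - b) * (y \<bullet> y) \<le> (a+b) * (y \<bullet> y) - 2 * (y \<bullet> F y)"
          using hi[of y] by (simp add: algebra_simps)
        moreover have "(a+b) * (y \<bullet> y) - 2 * (y \<bullet> F y) \<le> (b - a) * (y \<bullet> y)"
          using lo[of y] by (simp add: algebra_simps)
        ultimately show ?thesis using ab' unfolding e
          by (simp add: abs_le_iff field_simps)
      qed
      have normG: "norm (G y) \<le> norm y" for y by (rule polar_norm[OF linG symG bdG])
      define Tm where "Tm = fst (chebp m)"
      define U where "U = snd (chebp m)"
      define TL where "TL = pcompose Tm L"
      define UL where "UL = pcompose U L"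
      have pellL: "TL * TL - (L * L - 1) * (UL * UL) = 1"
      proof -
        define D where "D = [:-1,0,1::real:]"
        have h0: "Tm * Tm - D * (U * U) = 1"
          using cheb_pell[of m] by (simp only: Tm_def U_def D_def)
        have h1: "pcompose (Tm * Tm - D * (U * U)) L = TL * TL - pcompose D L * (UL * UL)"
          by (simp only: pcompose_diff pcompose_mult TL_def UL_def)
        have DX: "D = [:0,1:] * [:0,1:] - 1" using XX_eq by (simp add: D_def)
        have X: "pcompose [:0,1:] L = L" by (simp add: pcompose_pCons)
        have h2: "pcompose D L = L * L - 1"
          unfolding DX by (simp only: pcompose_diff pcompose_mult pcompose_1 X)
        have "pcompose (Tm * Tm - D * (U * U)) L = 1" unfolding h0 by (rule pcompose_1)
        then show ?thesis unfolding h1 h2 .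
      qed
      have normTL: "norm (pv F TL x) \<le> norm x" for x
      proof -
        let ?y = "pv F UL x"
        have e0: "pv F TL x \<bullet> pv F TL x = x \<bullet> pv F TL (pv F TL x)" by (rule pv_sym[OF sym])
        have e1: "(norm (pv F TL x))^2 = x \<bullet> pv F (TL * TL) x"
          using e0 by (simp only: power2_norm_eq_inner pv_mult[OF lin])
        have e2a: "TL * TL = 1 + (L * L - 1) * (UL * UL)" using pellL by (simp add: eq_diff_eq)
        have e2b: "(L * L - 1) * (UL * UL) = UL * ((L * L - 1) * UL)" by (simp only: ac_simps)
        have e3a: "pv F (TL * TL) x = x + pv F UL (G (G ?y) - ?y)"
          unfolding e2a e2b by (simp only: pv_add pv_1 pv_mult[OF lin] pv_diff G_def)
        have e3b: "x \<bullet> pv F UL (G (G ?y) - ?y) = ?y \<bullet> (G (G ?y) - ?y)"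
          using pv_sym[OF sym, of UL x "G (G ?y) - ?y"] by simp
        have e4a: "?y \<bullet> G (G ?y) = G ?y \<bullet> G ?y" using symG[of ?y "G ?y"] by simp
        have e4: "?y \<bullet> (G (G ?y) - ?y) = (norm (G ?y))^2 - (norm ?y)^2"
          using e4a by (simp add: inner_diff_right power2_norm_eq_inner)
        have e5: "(norm (G ?y))^2 \<le> (norm ?y)^2" using normG[of ?y] by (simp add: power_mono)
        have e6: "x \<bullet> pv F (TL * TL) x = x \<bullet> x + x \<bullet> pv F UL (G (G ?y) - ?y)"
          unfolding e3a by (simp add: inner_add_right)
        have e7: "(norm x)^2 = x \<bullet> x" by (rule power2_norm_eq_inner)
        have "(norm (pv F TL x))^2 \<le> (norm x)^2"
          using e1 e6 e3b e4 e5 e7 by linarith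
        then show ?thesis by (rule power2_le_imp_le) simp
      qed
      define c where "c = poly Tm \<sigma>"
      have c_ge: "(\<sigma> + r) ^ m / 2 \<le> c"
      proof -
        have "poly Tm \<sigma> = ((\<sigma> + r) ^ m + (\<sigma> - r) ^ m) / 2"
          using cheb_scalar[OF rr, of m] by (simp add: Tm_def)
        moreover have "0 \<le> (\<sigma> - r) ^ m" using sr_nonneg by simp
        ultimately show ?thesis by (simp add: c_def)
      qed
      have cpos: "0 < c"
      proof -
        have "0 < (\<sigma> + r) ^ m / 2" using spr_pos by simp
        then show ?thesis using c_ge by linarith
      qed
      have inv_c: "1 / c \<le> 2 * \<rho> ^ m"
      proof -
        have h1: "\<rho> ^ m * (\<sigma> + r) ^ m = 1" using rho_inv by (simp add: power_mult_distrib[symmetric] mult.commute)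
        have "\<rho> ^ m * ((\<sigma> + r) ^ m / 2) \<le> \<rho> ^ m * c"
          by (rule mult_left_mono[OF c_ge]) (simp add: rho_nonneg)
        then have "1 \<le> 2 * \<rho> ^ m * c" using h1 by simp
        then show ?thesis using cpos by (simp add: field_simps)
      qed
      define S where "S = smult (1/c) TL"
      have "degree S \<le> m"
      proof -
        have "degree TL = degree Tm * degree L" by (simp add: TL_def degree_pcompose)
        also have "\<dots> \<le> m * 1" using cheb_degree[of m]
          by (intro mult_mono) (auto simp: Tm_def L_def)
        finally show ?thesis by (simp add: S_def)
      qed
      moreover have "poly S 0 = 1"
        using cpos by (simp add: S_def TL_def poly_pcompose L0 c_def)
      moreover have "norm (pv F S x) \<le> 2 * \<rho> ^ m * norm x" for x
      proof -
        have "norm (pv F S x) = (1/c) * norm (pv F TL x)" using cpos by (simp add: S_def pv_smult)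
        also have "\<dots> \<le> (1/c) * norm x" using cpos normTL[of x] by (intro mult_left_mono) auto
        also have "\<dots> \<le> 2 * \<rho> ^ m * norm x" using inv_c by (intro mult_right_mono) auto
        finally show ?thesis .
      qed
      ultimately show ?thesis unfolding \<rho>_def s_def \<kappa>_def by blast
    qed
  qed
qed

lemma rayleigh_min:
  fixes F :: "'a::euclidean_space \<Rightarrow> 'a"
  assumes lin: "linear F" and sym: "\<And>x y. F x \<bullet> y = x \<bullet> F y"
    and sub: "subspace V" and inv: "\<And>x. x \<in> V \<Longrightarrow> F x \<in> V"
    and x0V: "x0 \<in> V" and x0: "x0 \<noteq> 0"
  shows "\<exists>u\<in>V. norm u = 1 \<and> F u = (u \<bullet> F u) *\<^sub>R u \<and> (\<forall>x\<in>V. (u \<bullet> F u) * (x \<bullet> x) \<le> x \<bullet> F x)"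
proof -
  let ?S = "sphere 0 1 \<inter> V"
  have cS: "compact ?S" by (rule compact_Int_closed[OF compact_sphere closed_subspace[OF sub]])
  have "x0 /\<^sub>R norm x0 \<in> ?S" using x0 x0V sub by (simp add: subspace_scale)
  then have neS: "?S \<noteq> {}" by blast
  have bl: "bounded_linear F" using lin by (simp add: linear_conv_bounded_linear)
  have cont: "continuous_on ?S (\<lambda>x. x \<bullet> F x)"
    by (intro continuous_intros linear_continuous_on[OF bl])
  obtain u where uS: "u \<in> ?S" and umin: "\<And>y. y \<in> ?S \<Longrightarrow> u \<bullet> F u \<le> y \<bullet> F y"
    using continuous_attains_inf[OF cS neS cont] by blast
  define \<mu> where "\<mu> = u \<bullet> F u"
  have uV: "u \<in> V" and un: "norm u = 1" using uS by auto
  have lower: "\<mu> * (x \<bullet> x) \<le> x \<bullet> F x" if xV: "x \<in> V" for x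
  proof (cases "x = 0")
    case True
    then show ?thesis using lin by (simp add: linear_0)
  next
    case False
    let ?y = "x /\<^sub>R norm x"
    have "?y \<in> ?S" using False xV sub by (simp add: subspace_scale)
    then have "\<mu> \<le> ?y \<bullet> F ?y" unfolding \<mu>_def by (rule umin)
    also have "?y \<bullet> F ?y = (x \<bullet> F x) / (norm x)^2"
      using lin by (simp add: linear_scale power2_eq_square field_simps)
    finally have "\<mu> * (norm x)^2 \<le> x \<bullet> F x" using False by (simp add: field_simps)
    then show ?thesis by (simp add: power2_norm_eq_inner)
  qed
  let ?N = "\<lambda>x. F x - \<mu> *\<^sub>R x"
  have linN: "linear ?N" using lin
    by (intro linear_compose_sub linear_compose_scale_right) (auto simp: linear_ident)
  have symN: "\<And>x y. ?N x \<bullet> y = x \<bullet> ?N y" using sym by (simp add: inner_diff_left inner_diff_right)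
  have psdN: "\<And>x. x \<in> V \<Longrightarrow> 0 \<le> x \<bullet> ?N x" using lower by (simp add: inner_diff_right)
  have NuV: "?N u \<in> V" using inv[OF uV] uV sub by (simp add: subspace_diff subspace_scale)
  have uu: "u \<bullet> u = 1" using un by (simp add: norm_eq_1)
  have uNu: "u \<bullet> ?N u = 0" using uu by (simp add: inner_diff_right \<mu>_def)
  have "(u \<bullet> ?N (?N u))^2 \<le> (u \<bullet> ?N u) * (?N u \<bullet> ?N (?N u))"
    by (rule psd_cs[OF linN symN sub psdN uV NuV])
  then have "(u \<bullet> ?N (?N u))^2 \<le> 0" using uNu by simp
  then have "u \<bullet> ?N (?N u) = 0" by simp
  moreover have "u \<bullet> ?N (?N u) = ?N u \<bullet> ?N u" using symN[of u "?N u"] by simp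
  ultimately have "?N u = 0" by simp
  then have "F u = \<mu> *\<^sub>R u" by simp
  then show ?thesis using uV un lower unfolding \<mu>_def by blast
qed

lemma sym_matrix:
  fixes A :: "real^'n^'n"
  assumes "transpose A = A"
  shows "(A *v x) \<bullet> y = x \<bullet> (A *v y)"
  by (metis dot_lmul_matrix vector_transpose_matrix assms)

lemma finite_eigvals:
  fixes A :: "real^'n^'n"
  assumes symA: "transpose A = A"
  shows "finite (eigvals A)"
proof -
  define ev where "ev \<mu> = (SOME v. v \<noteq> 0 \<and> A *v v = \<mu> *\<^sub>R v)" for \<mu>
  have ev: "ev \<mu> \<noteq> 0 \<and> A *v ev \<mu> = \<mu> *\<^sub>R ev \<mu>" if "\<mu> \<in> eigvals A" for \<mu>
    using that unfolding eigvals_def ev_def by (rule CollectE) (rule someI_ex)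
  have inj: "inj_on ev (eigvals A)"
  proof (rule inj_onI)
    fix \<mu> \<nu> assume m: "\<mu> \<in> eigvals A" and n: "\<nu> \<in> eigvals A" and e: "ev \<mu> = ev \<nu>"
    have "\<mu> *\<^sub>R ev \<mu> = \<nu> *\<^sub>R ev \<mu>" using ev[OF m] ev[OF n] e by metis
    then show "\<mu> = \<nu>" using ev[OF m] by simp
  qed
  have orth: "pairwise orthogonal (ev ` eigvals A)"
  proof (rule pairwiseI, clarify)
    fix \<mu> \<nu> assume m: "\<mu> \<in> eigvals A" and n: "\<nu> \<in> eigvals A" and ne: "ev \<mu> \<noteq> ev \<nu>"
    then have mn: "\<mu> \<noteq> \<nu>" by auto
    have "\<mu> * (ev \<mu> \<bullet> ev \<nu>) = (A *v ev \<mu>) \<bullet> ev \<nu>" using ev[OF m] by simp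
    also have "\<dots> = ev \<mu> \<bullet> (A *v ev \<nu>)" by (rule sym_matrix[OF symA])
    also have "\<dots> = \<nu> * (ev \<mu> \<bullet> ev \<nu>)" using ev[OF n] by simp
    finally have "(\<mu> - \<nu>) * (ev \<mu> \<bullet> ev \<nu>) = 0" by (simp add: algebra_simps)
    then show "orthogonal (ev \<mu>) (ev \<nu>)" using mn by (simp add: orthogonal_def)
  qed
  have "0 \<notin> ev ` eigvals A" using ev by auto
  then have "independent (ev ` eigvals A)" using orth by (intro pairwise_orthogonal_independent)
  then have "finite (ev ` eigvals A)" by (rule independent_imp_finite)
  then show ?thesis using inj by (rule finite_imageD)
qed

lemma eig_bounds:
  fixes A :: "real^'n^'n"
  assumes symA: "transpose A = A"
  shows "Min (eigvals A) * (x \<bullet> x) \<le> x \<bullet> (A *v x) \<and> x \<bullet> (A *v x) \<le> Max (eigvals A) * (x \<bullet> x)"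
proof -
  have fin: "finite (eigvals A)" by (rule finite_eigvals[OF symA])
  obtain x0 :: "real^'n" where x0: "x0 \<noteq> 0" using exists_nonzero by blast
  have sym: "\<And>x y. (A *v x) \<bullet> y = x \<bullet> (A *v y)" by (rule sym_matrix[OF symA])
  have lin: "linear (\<lambda>x. A *v x)" by simp
  obtain u where un: "norm u = 1" and ue: "A *v u = (u \<bullet> (A *v u)) *\<^sub>R u"
    and ul: "\<forall>x\<in>UNIV. (u \<bullet> (A *v u)) * (x \<bullet> x) \<le> x \<bullet> (A *v x)"
    using rayleigh_min[OF lin sym subspace_UNIV _ _ x0] by auto
  have "u \<bullet> (A *v u) \<in> eigvals A" unfolding eigvals_def using un ue by (auto intro!: exI[of _ u])
  then have "Min (eigvals A) \<le> u \<bullet> (A *v u)" using fin by simp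
  then have lo: "Min (eigvals A) * (x \<bullet> x) \<le> x \<bullet> (A *v x)"
    using ul by (meson inner_ge_zero mult_right_mono order_trans UNIV_I)
  have linm: "linear (\<lambda>x. - (A *v x))" using lin by (simp add: linear_compose_neg)
  have symm: "\<And>x y. - (A *v x) \<bullet> y = x \<bullet> - (A *v y)" using sym by simp
  obtain w where wn: "norm w = 1" and we: "- (A *v w) = (w \<bullet> - (A *v w)) *\<^sub>R w"
    and wl: "\<forall>x\<in>UNIV. (w \<bullet> - (A *v w)) * (x \<bullet> x) \<le> x \<bullet> - (A *v x)"
    using rayleigh_min[OF linm symm subspace_UNIV _ _ x0] by auto
  have we': "A *v w = (w \<bullet> (A *v w)) *\<^sub>R w" using we by (simp add: scaleR_left.minus inner_minus_right)
  have "w \<bullet> (A *v w) \<in> eigvals A" unfolding eigvals_def using wn we' by (auto intro!: exI[of _ w])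
  then have "w \<bullet> (A *v w) \<le> Max (eigvals A)" using fin by simp
  moreover have "x \<bullet> (A *v x) \<le> (w \<bullet> (A *v w)) * (x \<bullet> x)" using wl by simp
  ultimately have hi: "x \<bullet> (A *v x) \<le> Max (eigvals A) * (x \<bullet> x)"
    by (meson inner_ge_zero mult_right_mono order_trans)
  show ?thesis using lo hi by simp
qed

definition orthn :: "nat \<Rightarrow> (nat \<Rightarrow> 'a::real_inner) \<Rightarrow> bool" where
  "orthn k q \<longleftrightarrow> (\<forall>i\<in>{1..k}. \<forall>j\<in>{1..k}. q i \<bullet> q j = (if i = j then 1 else 0))"

lemma Qcoef:
  assumes o: "orthn k q" and i: "i \<in> {1..k}"
  shows "q i \<bullet> (\<Sum>j=1..k. v j *\<^sub>R q j) = v i"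
proof -
  have "q i \<bullet> (\<Sum>j=1..k. v j *\<^sub>R q j) = (\<Sum>j=1..k. v j * (q i \<bullet> q j))"
    by (simp add: inner_sum_right)
  also have "\<dots> = (\<Sum>j=1..k. (if i = j then v j else 0))"
    using o i unfolding orthn_def by (intro sum.cong) auto
  also have "\<dots> = v i" using i by (simp add: sum.delta sum.delta')
  finally show ?thesis .
qed

lemma Qinner:
  assumes o: "orthn k q"
  shows "(\<Sum>i=1..k. v i *\<^sub>R q i) \<bullet> (\<Sum>j=1..k. w j *\<^sub>R q j) = (\<Sum>i=1..k. v i * w i)"
  using Qcoef[OF o] by (simp add: inner_sum_left)

lemma Qnorm:
  assumes o: "orthn k q"
  shows "norm (\<Sum>i=1..k. v i *\<^sub>R q i) = vnorm k v"
  unfolding vnorm_def norm_eq_sqrt_inner Qinner[OF o] by (simp add: power2_eq_square)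

lemma Q_in_span: "(\<Sum>i=1..k. c i *\<^sub>R q i) \<in> span (q ` {1..k})"
  by (intro span_sum span_scale span_base) auto

lemma span_fix:
  assumes o: "orthn k q" and x: "x \<in> span (q ` {1..k})"
  shows "(\<Sum>i=1..k. (q i \<bullet> x) *\<^sub>R q i) = x"
proof -
  let ?T = "{x. (\<Sum>i=1..k. (q i \<bullet> x) *\<^sub>R q i) = x}"
  have "subspace ?T"
    unfolding subspace_def
  proof (intro conjI allI ballI)
    show "0 \<in> ?T" by simp
  next
    fix x y assume "x \<in> ?T" "y \<in> ?T"
    then show "x + y \<in> ?T" by (simp add: inner_add_right scaleR_add_left sum.distrib)
  next
    fix c x assume x: "x \<in> ?T"
    have "(\<Sum>i=1..k. (q i \<bullet> (c *\<^sub>R x)) *\<^sub>R q i) = c *\<^sub>R (\<Sum>i=1..k. (q i \<bullet> x) *\<^sub>R q i)"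
      by (simp add: scaleR_sum_right)
    then show "c *\<^sub>R x \<in> ?T" using x by simp
  qed
  moreover have "q ` {1..k} \<subseteq> ?T"
  proof
    fix y assume "y \<in> q ` {1..k}"
    then obtain j where j: "j \<in> {1..k}" and y: "y = q j" by auto
    have "(\<Sum>i=1..k. (q i \<bullet> q j) *\<^sub>R q i) = (\<Sum>i=1..k. (if i = j then q i else 0))"
      using o j unfolding orthn_def by (intro sum.cong) auto
    also have "\<dots> = q j" using j by (simp add: sum.delta)
    finally show "y \<in> ?T" using y by simp
  qed
  ultimately have "span (q ` {1..k}) \<subseteq> ?T" by (intro span_minimal)
  then show ?thesis using x by blast
qed

lemma span_orth:
  assumes o: "orthn k q" and y: "y \<in> span (q ` {1..m})" and mk: "m \<le> k"
    and j: "j \<in> {1..k}" and mj: "m < j"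
  shows "q j \<bullet> y = 0"
proof -
  have "q ` {1..m} \<subseteq> {x. q j \<bullet> x = 0}"
    using o j mj mk unfolding orthn_def by auto
  then have "span (q ` {1..m}) \<subseteq> {x. q j \<bullet> x = 0}"
    by (intro span_minimal subspace_hyperplane)
  then show ?thesis using y by blast
qed

lemma krylov_shift:
  fixes A :: "real^'n^'n"
  assumes "x \<in> krylov A g m"
  shows "A *v x \<in> krylov A g (Suc m)"
proof -
  let ?T = "{x. A *v x \<in> krylov A g (Suc m)}"
  have "subspace ?T"
    unfolding subspace_def krylov_def
    by (simp add: matrix_vector_right_distrib span_add span_zero matrix_vector_mult_scaleR span_scale)
  moreover have "{((\<lambda>x. A *v x) ^^ j) g | j. j < m} \<subseteq> ?T"
  proof
    fix y assume "y \<in> {((\<lambda>x. A *v x) ^^ j) g | j. j < m}"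
    then obtain j where j: "j < m" and y: "y = ((\<lambda>x. A *v x) ^^ j) g" by auto
    have "A *v y = ((\<lambda>x. A *v x) ^^ Suc j) g" using y by simp
    then have "A *v y \<in> {((\<lambda>x. A *v x) ^^ j) g | j. j < Suc m}" using j by blast
    then show "y \<in> ?T" unfolding krylov_def by (simp add: span_base)
  qed
  ultimately have "krylov A g m \<subseteq> ?T" unfolding krylov_def by (intro span_minimal)
  then show ?thesis using assms by blast
qed

lemma krylov_mono:
  "m \<le> m' \<Longrightarrow> krylov A g m \<subseteq> krylov A g m'"
  unfolding krylov_def by (intro span_mono) auto

lemma g_in_krylov: "0 < m \<Longrightarrow> g \<in> krylov A g m"
  unfolding krylov_def by (intro span_base) (auto intro!: exI[of _ 0])

lemma pv_in_subspace:
  assumes sub: "subspace V" and h: "\<And>i. i \<le> degree R \<Longrightarrow> coeff R i \<noteq> 0 \<Longrightarrow> (F ^^ i) x \<in> V"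
  shows "pv F R x \<in> V"
  unfolding pv_def
proof (rule subspace_sum[OF sub])
  fix i assume "i \<in> {..degree R}"
  then show "coeff R i *\<^sub>R (F ^^ i) x \<in> V"
    using h sub by (cases "coeff R i = 0") (auto simp: subspace_0 subspace_scale)
qed

lemma S_split:
  assumes "poly S 0 = 1" and "degree S \<le> m"
  shows "\<exists>R. S = pCons 1 R \<and> (R = 0 \<or> Suc (degree R) \<le> m)"
proof -
  obtain a R where S: "S = pCons a R" by (cases S) auto
  have "a = 1" using assms(1) S by simp
  moreover have "R = 0 \<or> Suc (degree R) \<le> m" using assms(2) S by (cases "R = 0") auto
  ultimately show ?thesis using S by blast
qed

lemma pv_pCons1:
  assumes "linear F"
  shows "pv F (pCons 1 R) x = x + pv F R (F x)"
proof -
  have "F (pv F R x) = pv F ([:0,1:] * R) x" by (simp only: pv_mult[OF assms] pv_X[OF assms])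
  also have "\<dots> = pv F (R * [:0,1:]) x" by (simp only: mult.commute)
  also have "\<dots> = pv F R (F x)" by (simp only: pv_mult[OF assms] pv_X[OF assms])
  finally show ?thesis using assms by (simp add: pv_pCons)
qed

lemma gltr_trs:
  fixes A :: "real^'n^'n" and q :: "nat \<Rightarrow> real^'n"
  assumes o: "orthn k q" and Tdef: "\<forall>i\<in>{1..k}. \<forall>j\<in>{1..k}. T i j = q i \<bullet> (A *v q j)"
    and k1: "1 \<le> k" and gq: "g = norm g *\<^sub>R q 1"
  shows "gltr_obj k T (norm g) v = trs_obj A g (\<Sum>i=1..k. v i *\<^sub>R q i)"
proof -
  let ?Q = "\<Sum>i=1..k. v i *\<^sub>R q i"
  have "A *v ?Q = (\<Sum>j=1..k. v j *\<^sub>R (A *v q j))"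
    by (simp add: linear_sum[OF matrix_vector_mul_linear] matrix_vector_mult_scaleR o_def)
  then have "?Q \<bullet> (A *v ?Q) = (\<Sum>j=1..k. \<Sum>i=1..k. v j * (v i * (q i \<bullet> (A *v q j))))"
    by (simp add: inner_sum_left inner_sum_right sum_distrib_left)
  also have "\<dots> = (\<Sum>i=1..k. \<Sum>j=1..k. v j * (v i * (q i \<bullet> (A *v q j))))"
    by (rule sum.swap)
  also have "\<dots> = (\<Sum>i=1..k. \<Sum>j=1..k. v i * T i j * v j)"
    using Tdef by (intro sum.cong) auto
  finally have e1: "?Q \<bullet> (A *v ?Q) = (\<Sum>i=1..k. \<Sum>j=1..k. v i * T i j * v j)" .
  have "?Q \<bullet> g = norm g * (q 1 \<bullet> ?Q)" by (subst gq) (simp add: inner_commute)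
  also have "q 1 \<bullet> ?Q = v 1" using Qcoef[OF o, of 1 v] k1 by simp
  finally have e2: "?Q \<bullet> g = norm g * v 1" .
  show ?thesis unfolding gltr_obj_def trs_obj_def e1 e2 by (simp add: mult.commute)
qed

lemma energy:
  fixes A :: "real^'n^'n"
  assumes sym: "\<And>x y. (A *v x) \<bullet> y = x \<bullet> (A *v y)"
    and kkt1: "A *v xopt + lopt *\<^sub>R xopt = - g"
    and nx: "norm x = D" and no: "norm xopt = D"
  shows "2 * (trs_obj A g x - trs_obj A g xopt) = (x - xopt) \<bullet> (A *v (x - xopt) + lopt *\<^sub>R (x - xopt))"
proof -
  have g0: "g = - (A *v xopt + lopt *\<^sub>R xopt)" using kkt1 by simp
  have g: "g = - (A *v xopt) - lopt *\<^sub>R xopt" unfolding g0 by (simp only: minus_add_distrib diff_conv_add_uminus)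
  have s: "xopt \<bullet> (A *v x) = x \<bullet> (A *v xopt)" using sym[of xopt x] by (simp add: inner_commute)
  have n1: "x \<bullet> x = D^2" using nx by (simp add: power2_norm_eq_inner[symmetric])
  have n2: "xopt \<bullet> xopt = D^2" using no by (simp add: power2_norm_eq_inner[symmetric])
  let ?d = "x - xopt"
  have f1: "?d \<bullet> (A *v ?d) = x \<bullet> (A *v x) - 2 * (x \<bullet> (A *v xopt)) + xopt \<bullet> (A *v xopt)"
    using s by (simp add: inner_diff_left inner_diff_right matrix_vector_mult_diff_distrib)
  have f2: "?d \<bullet> ?d = x \<bullet> x - 2 * (x \<bullet> xopt) + xopt \<bullet> xopt"
    by (simp add: inner_diff_left inner_diff_right inner_commute[of xopt x])
  have f0: "?d \<bullet> (A *v ?d + lopt *\<^sub>R ?d) = ?d \<bullet> (A *v ?d) + lopt * (?d \<bullet> ?d)"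
    by (simp add: inner_add_right)
  have f3: "x \<bullet> g = - (x \<bullet> (A *v xopt)) - lopt * (x \<bullet> xopt)"
    unfolding g by (simp add: inner_diff_right)
  have f4: "xopt \<bullet> g = - (xopt \<bullet> (A *v xopt)) - lopt * (xopt \<bullet> xopt)"
    unfolding g by (simp add: inner_diff_right)
  have t1: "trs_obj A g x = (1/2) * (x \<bullet> (A *v x)) + x \<bullet> g" by (simp add: trs_obj_def)
  have t2: "trs_obj A g xopt = (1/2) * (xopt \<bullet> (A *v xopt)) + xopt \<bullet> g" by (simp add: trs_obj_def)
  show ?thesis unfolding f0 f1 f2 t1 t2 f3 f4 n1 n2 by (simp add: algebra_simps)
qed

theorem corollary3p9:
  fixes A :: "real^'n^'n" and g :: "real^'n" and \<Delta> :: real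
    and xopt :: "real^'n" and lopt :: real
    and k :: nat and q :: "nat \<Rightarrow> real^'n" and T :: "nat \<Rightarrow> nat \<Rightarrow> real" and \<beta> :: real
    and h :: "nat \<Rightarrow> real" and lk :: real and xk :: "real^'n"
  assumes symA: "transpose A = A"
    and g0: "g \<noteq> 0"
    and Dpos: "\<Delta> > 0"
    (* x_opt global minimiser of the TRS, with Lagrange multiplier lopt *)
    and xopt_feas: "norm xopt \<le> \<Delta>"
    and xopt_min: "\<forall>x. norm x \<le> \<Delta> \<longrightarrow> trs_obj A g xopt \<le> trs_obj A g x"
    and lopt_nonneg: "lopt \<ge> 0"
    and kkt1: "A *v xopt + lopt *\<^sub>R xopt = - g"
    and kkt2: "lopt * (\<Delta> - norm xopt) = 0"
    and kkt3: "\<forall>v. 0 \<le> v \<bullet> (A *v v + lopt *\<^sub>R v)"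
    (* easy case *)
    and easy: "lopt > - Min (eigvals A)"
    (* Lanczos process *)
    and k1: "k \<ge> 1"
    and q_orth: "\<forall>i\<in>{1..k}. \<forall>j\<in>{1..k}. q i \<bullet> q j = (if i = j then 1 else 0)"
    and q_1: "q 1 = (1 / norm g) *\<^sub>R g"
    and q_span: "\<forall>m\<in>{1..k}. span (q ` {1..m}) = krylov A g m"
    and T_def: "\<forall>i\<in>{1..k}. \<forall>j\<in>{1..k}. T i j = q i \<bullet> (A *v q j)"
    and beta_nonneg: "\<beta> \<ge> 0"
    and q_next: "norm (q (k+1)) = 1"
    and lanczos_rel: "\<forall>j\<in>{1..k}. A *v q j
                         = (\<Sum>i=1..k. T i j *\<^sub>R q i) + (if j = k then \<beta> *\<^sub>R q (k+1) else 0)"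
    (* GLTR iterate *)
    and h_feas: "vnorm k h \<le> \<Delta>"
    and h_min: "\<forall>h'. vnorm k h' \<le> \<Delta> \<longrightarrow> gltr_obj k T (norm g) h \<le> gltr_obj k T (norm g) h'"
    and lk_nonneg: "lk \<ge> 0"
    and h_kkt1: "\<forall>i\<in>{1..k}. (\<Sum>j=1..k. (T i j + (if i = j then lk else 0)) * h j)
                               = (if i = 1 then - norm g else 0)"
    and h_kkt2: "lk * (\<Delta> - vnorm k h) = 0"
    and h_kkt3: "\<forall>v. (\<exists>i\<in>{1..k}. v i \<noteq> 0) \<longrightarrow>
                   0 < (\<Sum>i=1..k. \<Sum>j=1..k. v i * (T i j + (if i = j then lk else 0)) * v j)"
    and xk_def: "xk = (\<Sum>i=1..k. h i *\<^sub>R q i)"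
    (* boundary solutions *)
    and xopt_bd: "norm xopt = \<Delta>"
    and xk_bd: "norm xk = \<Delta>"
  shows
    "let Aopt = A + lopt *\<^sub>R mat 1;
         \<kappa> = (Max (eigvals A) + lopt) / (Min (eigvals A) + lopt);
         \<kappa>k = cond2 k (\<lambda>i j. T i j + (if i = j then lk else 0));
         \<epsilon>k = norm (xopt - (\<Sum>i=1..k. (q i \<bullet> xopt) *\<^sub>R q i));
         B1 = onorm (\<lambda>x. Aopt *v x) * sqrt (\<Delta>^2 + \<epsilon>k^2)
              * ((sqrt \<kappa> - 1) / (sqrt \<kappa> + 1)) ^ k;
         B2 = \<beta> * \<Delta> * ((sqrt \<kappa>k - 1) / (sqrt \<kappa>k + 1)) ^ (k - 1)
     in norm (A *v xk + lk *\<^sub>R xk + g) \<le> 2 * min B1 B2"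

proof -
  have o: "orthn k q" using q_orth by (simp add: orthn_def)
  define K where "K m = span (q ` {1..m})" for m
  define P where "P x = (\<Sum>i=1..k. (q i \<bullet> x) *\<^sub>R q i)" for x
  have kk: "k \<in> {1..k}" "1 \<in> {1..k}" using k1 by auto
  have KK: "K k = krylov A g k" using q_span kk(1) by (simp add: K_def)
  have subK: "subspace (K m)" for m by (simp add: K_def subspace_span)
  have symA': "\<And>x y. (A *v x) \<bullet> y = x \<bullet> (A *v y)" by (rule sym_matrix[OF symA])
  have P_add: "P (x + y) = P x + P y" for x y
    by (simp add: P_def inner_add_right scaleR_add_left sum.distrib)
  have P_scale: "P (c *\<^sub>R x) = c *\<^sub>R P x" for c x
    by (simp add: P_def scaleR_sum_right)
  have linP: "linear P" by (rule linearI) (simp_all add: P_add P_scale)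
  have P_in: "P x \<in> K k" for x unfolding P_def K_def by (rule Q_in_span)
  have P_fix: "x \<in> K k \<Longrightarrow> P x = x" for x unfolding P_def K_def by (rule span_fix[OF o])
  have P_coef: "i \<in> {1..k} \<Longrightarrow> q i \<bullet> P x = q i \<bullet> x" for i x
    unfolding P_def by (rule Qcoef[OF o])
  have P_sym: "P x \<bullet> y = x \<bullet> P y" for x y
    by (simp add: P_def inner_sum_left inner_sum_right inner_commute mult.commute)
  have orthK: "y \<bullet> z = 0" if y: "y \<in> K k" and z: "\<And>i. i \<in> {1..k} \<Longrightarrow> q i \<bullet> z = 0" for y z
  proof -
    have "q ` {1..k} \<subseteq> {y. y \<bullet> z = 0}" using z by auto
    then have "K k \<subseteq> {y. y \<bullet> z = 0}" unfolding K_def by (intro span_minimal subspace_hyperplane2)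
    then show ?thesis using y by blast
  qed
  have resP: "y \<bullet> (x - P x) = 0" if "y \<in> K k" for x y
    using that by (rule orthK) (simp add: inner_diff_right P_coef)
  have xk_K: "xk \<in> K k" unfolding xk_def K_def by (rule Q_in_span)
  have q1n: "norm (q 1) = 1" using q_orth kk(2) by (simp add: norm_eq_1)
  have g_q1: "g = norm g *\<^sub>R q 1" using q_1 g0 by simp
  have g_K1: "g \<in> K 1" unfolding K_def by (subst g_q1) (intro span_scale span_base, simp)
  have K_mono: "m \<le> m' \<Longrightarrow> K m \<subseteq> K m'" for m m' unfolding K_def by (intro span_mono) auto
  have g_K: "g \<in> K k" using g_K1 K_mono[of 1 k] k1 by blast
  have hk: "h k = q k \<bullet> xk" unfolding xk_def using Qcoef[OF o kk(1)] by simp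
  define r where "r = A *v xk + lk *\<^sub>R xk + g"
  have r_eq: "r = (h k * \<beta>) *\<^sub>R q (k+1)"
  proof -
    have "A *v xk = (\<Sum>j=1..k. h j *\<^sub>R (A *v q j))"
      unfolding xk_def by (simp add: linear_sum[OF matrix_vector_mul_linear] matrix_vector_mult_scaleR o_def)
    also have "\<dots> = (\<Sum>j=1..k. h j *\<^sub>R ((\<Sum>i=1..k. T i j *\<^sub>R q i) + (if j = k then \<beta> *\<^sub>R q (k+1) else 0)))"
      using lanczos_rel by (intro sum.cong) auto
    also have "\<dots> = (\<Sum>j=1..k. h j *\<^sub>R (\<Sum>i=1..k. T i j *\<^sub>R q i))
                     + (\<Sum>j=1..k. h j *\<^sub>R (if j = k then \<beta> *\<^sub>R q (k+1) else 0))"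
      by (simp add: scaleR_add_right sum.distrib)
    also have "(\<Sum>j=1..k. h j *\<^sub>R (if j = k then \<beta> *\<^sub>R q (k+1) else 0)) = (h k * \<beta>) *\<^sub>R q (k+1)"
    proof -
      have "(\<Sum>j=1..k. h j *\<^sub>R (if j = k then \<beta> *\<^sub>R q (k+1) else 0))
            = (\<Sum>j=1..k. if j = k then (h k * \<beta>) *\<^sub>R q (k+1) else 0)"
        by (intro sum.cong) auto
      also have "\<dots> = (h k * \<beta>) *\<^sub>R q (k+1)" using kk(1) by (simp add: sum.delta)
      finally show ?thesis .
    qed
    also have "(\<Sum>j=1..k. h j *\<^sub>R (\<Sum>i=1..k. T i j *\<^sub>R q i)) = (\<Sum>i=1..k. (\<Sum>j=1..k. T i j * h j) *\<^sub>R q i)"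
    proof -
      have "(\<Sum>j=1..k. h j *\<^sub>R (\<Sum>i=1..k. T i j *\<^sub>R q i)) = (\<Sum>j=1..k. \<Sum>i=1..k. (T i j * h j) *\<^sub>R q i)"
        by (simp add: scaleR_sum_right mult.commute)
      also have "\<dots> = (\<Sum>i=1..k. \<Sum>j=1..k. (T i j * h j) *\<^sub>R q i)" by (rule sum.swap)
      also have "\<dots> = (\<Sum>i=1..k. (\<Sum>j=1..k. T i j * h j) *\<^sub>R q i)" by (simp add: scaleR_sum_left)
      finally show ?thesis .
    qed
    finally have Axk: "A *v xk = (\<Sum>i=1..k. (\<Sum>j=1..k. T i j * h j) *\<^sub>R q i) + (h k * \<beta>) *\<^sub>R q (k+1)" .
    have lxk: "lk *\<^sub>R xk = (\<Sum>i=1..k. (lk * h i) *\<^sub>R q i)"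
      unfolding xk_def by (simp add: scaleR_sum_right)
    have gs: "g = (\<Sum>i=1..k. (if i = 1 then norm g else 0) *\<^sub>R q i)"
    proof -
      have "(\<Sum>i=1..k. (if i = 1 then norm g else 0) *\<^sub>R q i) = (\<Sum>i=1..k. if i = 1 then norm g *\<^sub>R q 1 else 0)"
        by (intro sum.cong) auto
      also have "\<dots> = norm g *\<^sub>R q 1" using kk(2) by (simp add: sum.delta)
      finally show ?thesis using g_q1 by simp
    qed
    have coef: "(\<Sum>j=1..k. T i j * h j) + lk * h i + (if i = 1 then norm g else 0) = 0" if i: "i \<in> {1..k}" for i
    proof -
      have "(\<Sum>j=1..k. (T i j + (if i = j then lk else 0)) * h j)
            = (\<Sum>j=1..k. T i j * h j) + (\<Sum>j=1..k. (if i = j then lk else 0) * h j)"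
        by (simp add: distrib_right sum.distrib)
      also have "(\<Sum>j=1..k. (if i = j then lk else 0) * h j) = (\<Sum>j=1..k. if i = j then lk * h i else 0)"
        by (intro sum.cong) auto
      also have "\<dots> = lk * h i" using i by (simp add: sum.delta)
      finally show ?thesis using h_kkt1 i by auto
    qed
    have "r = (\<Sum>i=1..k. ((\<Sum>j=1..k. T i j * h j) + lk * h i + (if i = 1 then norm g else 0)) *\<^sub>R q i)
              + (h k * \<beta>) *\<^sub>R q (k+1)"
      unfolding r_def Axk
      by (subst lxk, subst gs) (simp add: scaleR_add_left sum.distrib algebra_simps)
    also have "(\<Sum>i=1..k. ((\<Sum>j=1..k. T i j * h j) + lk * h i + (if i = 1 then norm g else 0)) *\<^sub>R q i) = 0"
      using coef by (intro sum.neutral) auto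
    finally show ?thesis by simp
  qed
  have bq_orth: "q i \<bullet> (\<beta> *\<^sub>R q (k+1)) = 0" if i: "i \<in> {1..k}" for i
  proof -
    have "\<beta> *\<^sub>R q (k+1) = A *v q k - (\<Sum>l=1..k. T l k *\<^sub>R q l)" using lanczos_rel kk(1) by simp
    then have "q i \<bullet> (\<beta> *\<^sub>R q (k+1)) = q i \<bullet> (A *v q k) - q i \<bullet> (\<Sum>l=1..k. T l k *\<^sub>R q l)"
      by (simp add: inner_diff_right)
    also have "q i \<bullet> (\<Sum>l=1..k. T l k *\<^sub>R q l) = T i k" by (rule Qcoef[OF o i])
    also have "q i \<bullet> (A *v q k) = T i k" using T_def i kk(1) by simp
    finally show ?thesis by simp
  qed
  have r_orth: "q i \<bullet> r = 0" if "i \<in> {1..k}" for i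
    using bq_orth[OF that] unfolding r_eq by (auto simp: mult.commute)
  have r_K: "y \<bullet> r = 0" if "y \<in> K k" for y using that r_orth by (rule orthK)
  have nr: "norm r = \<beta> * \<bar>h k\<bar>"
    using q_next beta_nonneg by (simp add: r_eq abs_mult)
  have B2part: "norm r \<le> 2 * (\<beta> * \<Delta> * ((sqrt (cond2 k (\<lambda>i j. T i j + (if i = j then lk else 0))) - 1)
                 / (sqrt (cond2 k (\<lambda>i j. T i j + (if i = j then lk else 0))) + 1)) ^ (k - 1))"
  proof -
    define Mk where "Mk = (\<lambda>i j. T i j + (if i = j then lk else 0))"
    define Q where "Q v = (\<Sum>i=1..k. v i *\<^sub>R q i)" for v
    define cf where "cf x = (\<lambda>i. q i \<bullet> x)" for x
    define Phi0 where "Phi0 x = P (A *v P x + lk *\<^sub>R P x)" for x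
    have Q_K: "Q v \<in> K k" for v unfolding Q_def K_def by (rule Q_in_span)
    have Q_norm: "norm (Q v) = vnorm k v" for v unfolding Q_def by (rule Qnorm[OF o])
    have Q_cf: "Q (cf x) = x" if "x \<in> K k" for x
      using P_fix[OF that] unfolding Q_def cf_def P_def .
    have Q_inner: "Q v \<bullet> Q w = (\<Sum>i=1..k. v i * w i)" for v w unfolding Q_def by (rule Qinner[OF o])
    have mvec_eq: "mvec k Mk v i = (\<Sum>j=1..k. T i j * v j) + lk * v i" if i: "i \<in> {1..k}" for v i
    proof -
      have "mvec k Mk v i = (\<Sum>j=1..k. T i j * v j) + (\<Sum>j=1..k. (if i = j then lk else 0) * v j)"
        by (simp add: mvec_def Mk_def distrib_right sum.distrib)
      also have "(\<Sum>j=1..k. (if i = j then lk else 0) * v j) = (\<Sum>j=1..k. if i = j then lk * v i else 0)"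
        by (intro sum.cong) auto
      also have "\<dots> = lk * v i" using i by (simp add: sum.delta)
      finally show ?thesis .
    qed
    have Phi0Q: "Phi0 (Q v) = Q (mvec k Mk v)" for v
    proof -
      have PQ: "P (Q v) = Q v" using Q_K by (rule P_fix)
      have c: "q i \<bullet> (A *v Q v + lk *\<^sub>R Q v) = mvec k Mk v i" if i: "i \<in> {1..k}" for i
      proof -
        have "A *v Q v = (\<Sum>j=1..k. v j *\<^sub>R (A *v q j))"
          unfolding Q_def by (simp add: linear_sum[OF matrix_vector_mul_linear] matrix_vector_mult_scaleR o_def)
        then have "q i \<bullet> (A *v Q v) = (\<Sum>j=1..k. v j * (q i \<bullet> (A *v q j)))" by (simp add: inner_sum_right)
        also have "\<dots> = (\<Sum>j=1..k. T i j * v j)" using T_def i by (intro sum.cong) auto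
        finally have "q i \<bullet> (A *v Q v) = (\<Sum>j=1..k. T i j * v j)" .
        moreover have "q i \<bullet> Q v = v i" unfolding Q_def by (rule Qcoef[OF o i])
        ultimately show ?thesis using mvec_eq[OF i] by (simp add: inner_add_right)
      qed
      show ?thesis unfolding Phi0_def PQ unfolding P_def Q_def[of "mvec k Mk v"]
        using c by (intro sum.cong) auto
    qed
    have linPhi0: "linear Phi0"
      by (rule linearI) (simp_all add: Phi0_def P_add P_scale matrix_vector_right_distrib
          matrix_vector_mult_scaleR scaleR_add_right add_ac)
    have Phi0_e1: "Phi0 x \<bullet> y = P x \<bullet> (A *v P y) + lk * (P x \<bullet> P y)" for x y
    proof -
      have "Phi0 x \<bullet> y = (A *v P x + lk *\<^sub>R P x) \<bullet> P y" unfolding Phi0_def by (rule P_sym)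
      then show ?thesis by (simp add: inner_add_left symA')
    qed
    have Phi0_e2: "x \<bullet> Phi0 y = P x \<bullet> (A *v P y) + lk * (P x \<bullet> P y)" for x y
    proof -
      have "x \<bullet> Phi0 y = P x \<bullet> (A *v P y + lk *\<^sub>R P y)" unfolding Phi0_def by (rule P_sym[symmetric])
      then show ?thesis by (simp add: inner_add_right)
    qed
    have symPhi0: "\<And>x y. Phi0 x \<bullet> y = x \<bullet> Phi0 y" using Phi0_e1 Phi0_e2 by simp
    have invPhi0: "\<And>x. x \<in> K k \<Longrightarrow> Phi0 x \<in> K k" unfolding Phi0_def by (rule P_in)
    have q1K: "q 1 \<in> K k" unfolding K_def using kk(2) by (intro span_base) auto
    have q1nz: "q 1 \<noteq> 0" using q1n by auto
    obtain u where uK: "u \<in> K k" and un: "norm u = 1" and ue: "Phi0 u = (u \<bullet> Phi0 u) *\<^sub>R u"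
      and ul: "\<forall>x\<in>K k. (u \<bullet> Phi0 u) * (x \<bullet> x) \<le> x \<bullet> Phi0 x"
      using rayleigh_min[OF linPhi0 symPhi0 subK invPhi0 q1K q1nz] by blast
    define \<mu> where "\<mu> = u \<bullet> Phi0 u"
    have quad: "Q v \<bullet> Phi0 (Q v) = (\<Sum>i=1..k. \<Sum>j=1..k. v i * Mk i j * v j)" for v
    proof -
      have "Q v \<bullet> Phi0 (Q v) = (\<Sum>i=1..k. v i * mvec k Mk v i)" unfolding Phi0Q Q_inner ..
      also have "\<dots> = (\<Sum>i=1..k. \<Sum>j=1..k. v i * Mk i j * v j)"
        by (simp add: mvec_def sum_distrib_left mult.assoc)
      finally show ?thesis .
    qed
    have mupos: "0 < \<mu>"
    proof -
      let ?v = "cf u"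
      have uQ: "Q ?v = u" by (rule Q_cf[OF uK])
      have "\<exists>i\<in>{1..k}. ?v i \<noteq> 0"
      proof (rule ccontr)
        assume "\<not> (\<exists>i\<in>{1..k}. ?v i \<noteq> 0)"
        then have "Q ?v = 0" unfolding Q_def by (intro sum.neutral) auto
        then show False using uQ un by simp
      qed
      then have "0 < (\<Sum>i=1..k. \<Sum>j=1..k. ?v i * (T i j + (if i = j then lk else 0)) * ?v j)"
        using h_kkt3 by blast
      then show ?thesis using quad[of ?v] uQ by (simp add: \<mu>_def Mk_def)
    qed
    define Sset where "Sset = (\<lambda>v. vnorm k (mvec k Mk v)) ` {v. vnorm k v = 1}"
    have blPhi0: "bounded_linear Phi0" using linPhi0 by (simp add: linear_conv_bounded_linear)
    have bdd: "bdd_above Sset"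
    proof (rule bdd_aboveI)
      fix s assume "s \<in> Sset"
      then obtain v where v: "vnorm k v = 1" and s: "s = vnorm k (mvec k Mk v)" by (auto simp: Sset_def)
      have "s = norm (Phi0 (Q v))" by (simp add: s Phi0Q Q_norm)
      also have "\<dots> \<le> onorm Phi0 * norm (Q v)" by (rule onorm[OF blPhi0])
      finally show "s \<le> onorm Phi0" using v by (simp add: Q_norm)
    qed
    have norm_in: "norm (Phi0 x) \<in> Sset" if "x \<in> K k" "norm x = 1" for x
    proof -
      have "vnorm k (cf x) = 1" using Q_norm[of "cf x"] Q_cf[OF that(1)] that(2) by simp
      moreover have "norm (Phi0 x) = vnorm k (mvec k Mk (cf x))"
        using Q_cf[OF that(1)] Phi0Q[of "cf x"] Q_norm by metis
      ultimately show ?thesis unfolding Sset_def by blast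
    qed
    have mu_in: "\<mu> \<in> Sset"
    proof -
      have "norm (Phi0 u) = \<mu>" using ue un mupos by (simp add: \<mu>_def[symmetric])
      then show ?thesis using norm_in[OF uK un] by simp
    qed
    have mu_le: "\<mu> \<le> s" if sS: "s \<in> Sset" for s
    proof -
      obtain v where v: "vnorm k v = 1" and s: "s = vnorm k (mvec k Mk v)"
        using sS by (auto simp: Sset_def)
      let ?x = "Q v"
      have xn: "norm ?x = 1" using v by (simp add: Q_norm)
      then have xx: "?x \<bullet> ?x = 1" by (simp add: norm_eq_1)
      have "\<mu> = \<mu> * (?x \<bullet> ?x)" using xx by simp
      also have "\<dots> \<le> ?x \<bullet> Phi0 ?x" using ul Q_K by (simp add: \<mu>_def)
      also have "\<dots> \<le> norm ?x * norm (Phi0 ?x)" by (rule norm_cauchy_schwarz)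
      also have "\<dots> = s" using xn by (simp add: s Phi0Q Q_norm)
      finally show ?thesis .
    qed
    have Inf_eq: "Inf Sset = \<mu>" using mu_in mu_le by (intro cInf_eq_minimum) auto
    define b' where "b' = Sup Sset"
    have mu_b: "\<mu> \<le> b'" unfolding b'_def using mu_in bdd by (rule cSup_upper)
    have cond_eq: "cond2 k Mk = b' / \<mu>"
      unfolding cond2_def b'_def Inf_eq[symmetric] Sset_def ..
    have upper: "y \<bullet> Phi0 y \<le> b' * (y \<bullet> y)" if yK: "y \<in> K k" for y
    proof (cases "y = 0")
      case True
      then show ?thesis using linPhi0 by (simp add: linear_0)
    next
      case False
      let ?z = "(1 / norm y) *\<^sub>R y"
      have zK: "?z \<in> K k" using yK subK by (simp add: subspace_scale)
      have zn: "norm ?z = 1" using False by simp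
      have "?z \<bullet> Phi0 ?z \<le> norm ?z * norm (Phi0 ?z)" by (rule norm_cauchy_schwarz)
      also have "\<dots> \<le> b'" using zn norm_in[OF zK zn] bdd unfolding b'_def by (simp add: cSup_upper)
      finally have zb: "?z \<bullet> Phi0 ?z \<le> b'" .
      have pz: "Phi0 ?z = (1 / norm y) *\<^sub>R Phi0 y" by (rule linear_scale[OF linPhi0])
      have "?z \<bullet> Phi0 ?z = (y \<bullet> Phi0 y) / (norm y)^2" unfolding pz by (simp add: power2_eq_square)
      then have "(y \<bullet> Phi0 y) / (norm y)^2 \<le> b'" using zb by simp
      then have "y \<bullet> Phi0 y \<le> b' * (norm y)^2" using False by (simp add: divide_le_eq)
      then show ?thesis by (simp add: power2_norm_eq_inner)
    qed
    define Phi where "Phi x = Phi0 x + \<mu> *\<^sub>R (x - P x)" for x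
    have Phi_eq: "Phi = (\<lambda>x. Phi0 x + \<mu> *\<^sub>R (x - P x))" by (rule ext) (simp only: Phi_def)
    have linPhi: "linear Phi" unfolding Phi_eq
      by (intro linear_compose_add linPhi0 linear_compose_scale_right linear_compose_sub linear_ident linP)
    have symPhi: "\<And>x y. Phi x \<bullet> y = x \<bullet> Phi y"
    proof -
      fix x y
      have e1: "Phi x \<bullet> y = Phi0 x \<bullet> y + \<mu> * (x \<bullet> y - P x \<bullet> y)"
        by (simp only: Phi_def inner_add_left inner_diff_left inner_scaleR_left)
      have e2: "x \<bullet> Phi y = x \<bullet> Phi0 y + \<mu> * (x \<bullet> y - x \<bullet> P y)"
        by (simp only: Phi_def inner_add_right inner_diff_right inner_scaleR_right)
      show "Phi x \<bullet> y = x \<bullet> Phi y" unfolding e1 e2 symPhi0 P_sym ..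
    qed
    have PP: "P (P x) = P x" for x by (rule P_fix[OF P_in])
    have Phi0P: "Phi0 (P x) = Phi0 x" for x by (simp add: Phi0_def PP)
    have xPhi0: "x \<bullet> Phi0 x = P x \<bullet> Phi0 (P x)" for x
      using Phi0_e2[of x x] Phi0_e2[of "P x" "P x"] by (simp add: PP)
    have splt: "x \<bullet> x = P x \<bullet> P x + (x - P x) \<bullet> (x - P x)" for x
    proof -
      have "P x \<bullet> (x - P x) = 0" by (rule resP[OF P_in])
      then show ?thesis by (simp add: inner_diff_left inner_diff_right inner_commute)
    qed
    have xPhi: "x \<bullet> Phi x = P x \<bullet> Phi0 (P x) + \<mu> * ((x - P x) \<bullet> (x - P x))" for x
    proof -
      have "P x \<bullet> (x - P x) = 0" by (rule resP[OF P_in])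
      then have "x \<bullet> (x - P x) = (x - P x) \<bullet> (x - P x)" by (simp add: inner_diff_left)
      then have b: "\<mu> * (x \<bullet> (x - P x)) = \<mu> * ((x - P x) \<bullet> (x - P x))" by simp
      have a: "x \<bullet> Phi x = x \<bullet> Phi0 x + \<mu> * (x \<bullet> (x - P x))"
        by (simp only: Phi_def inner_add_right inner_scaleR_right)
      show ?thesis using a b xPhi0[of x] by linarith
    qed
    have lo: "\<mu> * (x \<bullet> x) \<le> x \<bullet> Phi x" for x
    proof -
      have "\<mu> * (P x \<bullet> P x) \<le> P x \<bullet> Phi0 (P x)" using ul P_in by (simp add: \<mu>_def)
      then show ?thesis unfolding xPhi splt[of x] by (simp add: distrib_left)
    qed
    have hi: "x \<bullet> Phi x \<le> b' * (x \<bullet> x)" for x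
    proof -
      have "P x \<bullet> Phi0 (P x) \<le> b' * (P x \<bullet> P x)" by (rule upper[OF P_in])
      moreover have "\<mu> * ((x - P x) \<bullet> (x - P x)) \<le> b' * ((x - P x) \<bullet> (x - P x))"
        using mu_b by (intro mult_right_mono) auto
      ultimately show ?thesis unfolding xPhi splt[of x] by (simp add: distrib_left)
    qed
    obtain S where Sdeg: "degree S \<le> k - 1" and S0: "poly S 0 = 1"
      and Sb: "\<forall>x. norm (pv Phi S x) \<le> 2 * ((sqrt (b'/\<mu>) - 1) / (sqrt (b'/\<mu>) + 1)) ^ (k - 1) * norm x"
      using cheb_bound[OF linPhi symPhi mupos lo hi, of "k - 1"] by blast
    obtain R where SR: "S = pCons 1 R" and Rdeg: "R = 0 \<or> Suc (degree R) \<le> k - 1"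
      using S_split[OF S0 Sdeg] by blast
    have Pr: "P r = 0" unfolding P_def using r_orth by (intro sum.neutral) auto
    have Phixk: "Phi xk = - g"
    proof -
      have "A *v xk + lk *\<^sub>R xk = r - g" by (simp add: r_def)
      then have "Phi0 xk = P (r - g)" by (simp add: Phi0_def P_fix[OF xk_K])
      also have "\<dots> = - g" using linear_diff[OF linP, of r g] Pr P_fix[OF g_K] by simp
      finally show ?thesis by (simp add: Phi_def P_fix[OF xk_K])
    qed
    have pvS: "pv Phi S xk = xk - pv Phi R g"
      unfolding SR pv_pCons1[OF linPhi] Phixk using linear_neg[OF linear_pv[OF linPhi]] by simp
    have iter: "(Phi ^^ i) g \<in> K (i + 1)" if "i + 1 \<le> k" for i
      using that
    proof (induction i)
      case 0
      then show ?case using g_K1 by simp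
    next
      case (Suc i)
      let ?x = "(Phi ^^ i) g"
      have xK: "?x \<in> K (i + 1)" using Suc by simp
      have xKk: "?x \<in> K k" using xK K_mono[of "i+1" k] Suc.prems by auto
      have i1: "i + 1 \<in> {1..k}" and i2: "Suc (i + 1) \<in> {1..k}" using Suc.prems by auto
      have "?x \<in> krylov A g (i + 1)" using xK q_span i1 by (simp add: K_def)
      then have "A *v ?x \<in> krylov A g (Suc (i + 1))" by (rule krylov_shift)
      then have Ax: "A *v ?x \<in> K (i + 2)" using q_span i2 by (simp add: K_def)
      have lx: "lk *\<^sub>R ?x \<in> K (i + 2)" using xK K_mono[of "i+1" "i+2"] subK by (auto simp: subspace_scale)
      have s: "A *v ?x + lk *\<^sub>R ?x \<in> K (i + 2)" using Ax lx subK by (simp add: subspace_add)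
      then have sk: "A *v ?x + lk *\<^sub>R ?x \<in> K k" using K_mono[of "i+2" k] Suc.prems by auto
      have "Phi ?x = A *v ?x + lk *\<^sub>R ?x"
        by (simp add: Phi_def Phi0_def P_fix[OF xKk] P_fix[OF sk])
      then show ?case using s by simp
    qed
    have pvR_K: "pv Phi R g \<in> K (k - 1)"
    proof (rule pv_in_subspace[OF subK])
      fix i assume i: "i \<le> degree R" and c: "coeff R i \<noteq> 0"
      then have "R \<noteq> 0" by auto
      then have "i + 1 \<le> k - 1" using Rdeg i by auto
      then have "(Phi ^^ i) g \<in> K (i + 1)" by (intro iter) auto
      then show "(Phi ^^ i) g \<in> K (k - 1)" using K_mono[of "i+1" "k-1"] \<open>i + 1 \<le> k - 1\<close> by auto
    qed
    have qR: "q k \<bullet> pv Phi R g = 0"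
      using span_orth[OF o _ _ kk(1)] pvR_K k1 unfolding K_def by simp
    have hk2: "h k = q k \<bullet> pv Phi S xk"
      using hk qR by (simp add: pvS inner_diff_right)
    define \<rho> where "\<rho> = (sqrt (b'/\<mu>) - 1) / (sqrt (b'/\<mu>) + 1)"
    have "\<bar>h k\<bar> \<le> norm (q k) * norm (pv Phi S xk)" unfolding hk2 by (rule Cauchy_Schwarz_ineq2)
    also have "norm (q k) = 1" using q_orth kk(1) by (simp add: norm_eq_1)
    also have "norm (pv Phi S xk) \<le> 2 * \<rho> ^ (k - 1) * \<Delta>"
      using spec[OF Sb, of xk] xk_bd by (simp add: \<rho>_def)
    finally have hkb: "\<bar>h k\<bar> \<le> 2 * \<rho> ^ (k - 1) * \<Delta>" by simp
    have "norm r \<le> \<beta> * (2 * \<rho> ^ (k - 1) * \<Delta>)"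
      unfolding nr using hkb beta_nonneg by (rule mult_left_mono)
    then show ?thesis unfolding Mk_def[symmetric] cond_eq \<rho>_def by (simp add: algebra_simps)
  qed
  have B1part: "norm r \<le> 2 * (onorm (\<lambda>x. (A + lopt *\<^sub>R mat 1) *v x)
        * sqrt (\<Delta>^2 + (norm (xopt - (\<Sum>i=1..k. (q i \<bullet> xopt) *\<^sub>R q i)))^2)
        * ((sqrt ((Max (eigvals A) + lopt) / (Min (eigvals A) + lopt)) - 1)
           / (sqrt ((Max (eigvals A) + lopt) / (Min (eigvals A) + lopt)) + 1)) ^ k)"
  proof -
    define M where "M x = A *v x + lopt *\<^sub>R x" for x
    have Me: "M e = A *v e + lopt *\<^sub>R e" for e by (simp add: M_def)
    define a where "a = Min (eigvals A) + lopt"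
    define b where "b = Max (eigvals A) + lopt"
    have apos: "0 < a" using easy by (simp add: a_def)
    have M_eq: "M = (\<lambda>x. A *v x + lopt *\<^sub>R x)" by (rule ext) (simp only: M_def)
    have linM: "linear M" unfolding M_eq
      by (intro linear_compose_add matrix_vector_mul_linear linear_compose_scale_right linear_ident)
    have symM: "\<And>x y. M x \<bullet> y = x \<bullet> M y"
      by (simp add: M_def inner_add_left inner_add_right symA')
    have loM: "a * (x \<bullet> x) \<le> x \<bullet> M x" for x
      using eig_bounds[OF symA, of x] by (simp add: M_def a_def inner_add_right algebra_simps)
    have hiM: "x \<bullet> M x \<le> b * (x \<bullet> x)" for x
      using eig_bounds[OF symA, of x] by (simp add: M_def b_def inner_add_right algebra_simps)
    obtain S where Sdeg: "degree S \<le> k" and S0: "poly S 0 = 1"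
      and Sb: "\<forall>x. norm (pv M S x) \<le> 2 * ((sqrt (b/a) - 1) / (sqrt (b/a) + 1)) ^ k * norm x"
      using cheb_bound[OF linM symM apos loM hiM, of k] by blast
    define \<rho> where "\<rho> = (sqrt (b/a) - 1) / (sqrt (b/a) + 1)"
    have ab: "a \<le> b"
    proof -
      obtain x0 :: "real^'n" where x0: "x0 \<noteq> 0" using exists_nonzero by blast
      have "a * (x0 \<bullet> x0) \<le> b * (x0 \<bullet> x0)" using loM[of x0] hiM[of x0] by linarith
      then show ?thesis using x0 by simp
    qed
    have rho_nn: "0 \<le> \<rho>"
    proof -
      have "1 \<le> b / a" using ab apos by simp
      then have "1 \<le> sqrt (b / a)" by simp
      then show ?thesis by (simp add: \<rho>_def)
    qed
    obtain R where SR: "S = pCons 1 R" and Rdeg: "R = 0 \<or> Suc (degree R) \<le> k"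
      using S_split[OF S0 Sdeg] by blast
    have Mxopt: "M xopt = - g" using kkt1 by (simp add: M_def)
    have pvS: "pv M S xopt = xopt - pv M R g"
      unfolding SR pv_pCons1[OF linM] Mxopt using linear_neg[OF linear_pv[OF linM]] by simp
    have iterM: "(M ^^ i) g \<in> krylov A g (i + 1)" for i
    proof (induction i)
      case 0
      then show ?case by (simp add: g_in_krylov)
    next
      case (Suc i)
      let ?x = "(M ^^ i) g"
      have "A *v ?x \<in> krylov A g (Suc (i + 1))" using Suc by (rule krylov_shift)
      moreover have "?x \<in> krylov A g (Suc (i + 1))" using Suc krylov_mono[of "i+1" "Suc (i+1)" A g] by auto
      ultimately have "A *v ?x + lopt *\<^sub>R ?x \<in> krylov A g (Suc (i + 1))"
        unfolding krylov_def by (intro span_add span_scale)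
      moreover have "(M ^^ Suc i) g = A *v ?x + lopt *\<^sub>R ?x"
        by (simp only: funpow.simps(2) o_apply Me)
      ultimately show ?case by simp
    qed
    define w where "w = pv M R g"
    have wK: "w \<in> K k" unfolding KK w_def
    proof (rule pv_in_subspace)
      show "subspace (krylov A g k)" by (simp add: krylov_def subspace_span)
    next
      fix i assume i: "i \<le> degree R" and c: "coeff R i \<noteq> 0"
      then have "R \<noteq> 0" by auto
      then have "i + 1 \<le> k" using Rdeg i by auto
      then show "(M ^^ i) g \<in> krylov A g k" using iterM[of i] krylov_mono[of "i+1" k A g] by auto
    qed
    have xw: "norm (xopt - w) \<le> 2 * \<rho> ^ k * \<Delta>"
    proof -
      have "xopt - w = pv M S xopt" using pvS by (simp add: w_def)
      then show ?thesis using spec[OF Sb, of xopt] xopt_bd by (simp add: \<rho>_def)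
    qed
    define y where "y = P xopt"
    define \<epsilon> where "\<epsilon> = norm (xopt - y)"
    have yK: "y \<in> K k" unfolding y_def by (rule P_in)
    have orth_y: "v \<bullet> (xopt - y) = 0" if "v \<in> K k" for v unfolding y_def by (rule resP[OF that])
    have eps_le: "\<epsilon> \<le> norm (xopt - w)"
    proof -
      have ywK: "y - w \<in> K k" using yK wK subK by (simp add: subspace_diff)
      have "orthogonal (xopt - y) (y - w)"
        using orth_y[OF ywK] by (simp add: orthogonal_def inner_commute)
      then have "(norm ((xopt - y) + (y - w)))^2 = (norm (xopt - y))^2 + (norm (y - w))^2"
        by (rule norm_add_Pythagorean)
      then have "\<epsilon>^2 \<le> (norm (xopt - w))^2" by (simp add: \<epsilon>_def)
      then show ?thesis by (rule power2_le_imp_le) simp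
    qed
    have eps_rho: "\<epsilon> \<le> 2 * \<rho> ^ k * \<Delta>" using eps_le xw by linarith
    have eps_nn: "0 \<le> \<epsilon>" by (simp add: \<epsilon>_def)
    have pyth: "\<Delta>^2 = (norm y)^2 + \<epsilon>^2"
    proof -
      have "orthogonal y (xopt - y)" using orth_y[OF yK] by (simp add: orthogonal_def)
      then have "(norm (y + (xopt - y)))^2 = (norm y)^2 + (norm (xopt - y))^2"
        by (rule norm_add_Pythagorean)
      then show ?thesis using xopt_bd by (simp add: \<epsilon>_def)
    qed
    have yD: "norm y \<le> \<Delta>"
    proof -
      have "(norm y)^2 \<le> \<Delta>^2" using pyth by simp
      then show ?thesis using power2_le_imp_le[of "norm y" \<Delta>] Dpos by simp
    qed
    define z where "z = (if y = 0 then \<Delta> *\<^sub>R q 1 else (\<Delta> / norm y) *\<^sub>R y)"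
    have q1K: "q 1 \<in> K k" unfolding K_def using kk(2) by (intro span_base) auto
    have zK: "z \<in> K k" unfolding z_def using q1K yK subK by (auto simp: subspace_scale)
    have zn: "norm z = \<Delta>" unfolding z_def using q1n Dpos by auto
    have zy: "norm (z - y) = \<Delta> - norm y"
    proof (cases "y = 0")
      case True
      then show ?thesis unfolding z_def using q1n Dpos by simp
    next
      case False
      then have "z - y = (\<Delta> / norm y - 1) *\<^sub>R y" by (simp add: z_def algebra_simps)
      then have "norm (z - y) = \<bar>\<Delta> / norm y - 1\<bar> * norm y" by simp
      also have "\<dots> = \<bar>\<Delta> - norm y\<bar>" using False by (simp add: abs_mult[symmetric] field_simps)
      also have "\<dots> = \<Delta> - norm y" using yD by simp
      finally show ?thesis .
    qed
    have zx: "(norm (z - xopt))^2 = (\<Delta> - norm y)^2 + \<epsilon>^2"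
    proof -
      have zyK: "z - y \<in> K k" using zK yK subK by (simp add: subspace_diff)
      have "orthogonal (z - y) (y - xopt)"
        using orth_y[OF zyK] by (simp add: orthogonal_def inner_diff_right)
      then have "(norm ((z - y) + (y - xopt)))^2 = (norm (z - y))^2 + (norm (y - xopt))^2"
        by (rule norm_add_Pythagorean)
      then show ?thesis using zy by (simp add: \<epsilon>_def norm_minus_commute)
    qed
    have dy1: "(\<Delta> - norm y) * \<Delta> \<le> \<epsilon>^2"
    proof -
      have "(\<Delta> - norm y) * (\<Delta> + norm y) = \<epsilon>^2" using pyth by (simp add: algebra_simps power2_eq_square)
      moreover have "(\<Delta> - norm y) * \<Delta> \<le> (\<Delta> - norm y) * (\<Delta> + norm y)"
        using yD by (intro mult_left_mono) auto
      ultimately show ?thesis by simp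
    qed
    have dy2: "(\<Delta> - norm y)^2 * \<Delta>^2 \<le> \<epsilon>^2 * \<epsilon>^2"
    proof -
      have "0 \<le> (\<Delta> - norm y) * \<Delta>" using yD Dpos by simp
      then have "((\<Delta> - norm y) * \<Delta>)^2 \<le> (\<epsilon>^2)^2" by (rule power_mono[OF dy1])
      then show ?thesis by (simp only: power_mult_distrib power2_eq_square[of "\<epsilon>^2"])
    qed
    have er: "\<epsilon>^2 \<le> (2 * \<rho> ^ k)^2 * \<Delta>^2"
    proof -
      have "\<epsilon>^2 \<le> (2 * \<rho> ^ k * \<Delta>)^2" using eps_rho eps_nn by (rule power_mono)
      then show ?thesis by (simp add: power_mult_distrib)
    qed
    have zxb: "(norm (z - xopt))^2 \<le> (2 * \<rho> ^ k)^2 * (\<Delta>^2 + \<epsilon>^2)"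
    proof -
      have D2: "0 < \<Delta>^2" using Dpos by simp
      have "(\<Delta> - norm y)^2 * \<Delta>^2 \<le> ((2 * \<rho> ^ k)^2 * \<Delta>^2) * \<epsilon>^2"
        using dy2 er by (meson order_trans mult_right_mono zero_le_power2)
      then have "(\<Delta> - norm y)^2 \<le> (2 * \<rho> ^ k)^2 * \<epsilon>^2"
        using D2 by (simp add: algebra_simps)
      moreover have "\<epsilon>^2 \<le> (2 * \<rho> ^ k)^2 * \<Delta>^2" by (rule er)
      ultimately show ?thesis unfolding zx by (simp add: algebra_simps)
    qed
    have fz: "trs_obj A g xk \<le> trs_obj A g z"
    proof -
      let ?vz = "\<lambda>i. q i \<bullet> z"
      have Qz: "(\<Sum>i=1..k. ?vz i *\<^sub>R q i) = z" using P_fix[OF zK] by (simp add: P_def)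
      have "vnorm k ?vz = \<Delta>" using Qnorm[OF o, of ?vz] Qz zn by simp
      then have "gltr_obj k T (norm g) h \<le> gltr_obj k T (norm g) ?vz" using h_min by simp
      moreover have "gltr_obj k T (norm g) h = trs_obj A g xk"
        unfolding xk_def by (rule gltr_trs[OF o T_def k1 g_q1])
      moreover have "gltr_obj k T (norm g) ?vz = trs_obj A g z"
        using gltr_trs[OF o T_def k1 g_q1, of ?vz] Qz by simp
      ultimately show ?thesis by simp
    qed
    define e where "e = xk - xopt"
    define d where "d = z - xopt"
    have en1: "2 * (trs_obj A g xk - trs_obj A g xopt) = e \<bullet> M e"
      unfolding e_def Me by (rule energy[OF symA' kkt1 xk_bd xopt_bd])
    have en2: "2 * (trs_obj A g z - trs_obj A g xopt) = d \<bullet> M d"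
      unfolding d_def Me by (rule energy[OF symA' kkt1 zn xopt_bd])
    have eMe: "e \<bullet> M e \<le> d \<bullet> M d"
    proof -
      have "e \<bullet> M e = 2 * (trs_obj A g xk - trs_obj A g xopt)" using en1 by simp
      also have "\<dots> \<le> 2 * (trs_obj A g z - trs_obj A g xopt)" using fz by simp
      also have "\<dots> = d \<bullet> M d" using en2 by simp
      finally show ?thesis .
    qed
    define Mop where "Mop = onorm (\<lambda>x. (A + lopt *\<^sub>R mat 1) *v x)"
    have AoptM: "(\<lambda>x. (A + lopt *\<^sub>R mat 1) *v x) = M"
      by (rule ext) (simp add: M_def matrix_vector_mult_add_rdistrib scaleR_matrix_vector_assoc[symmetric])
    have blM: "bounded_linear M" using linM by (simp add: linear_conv_bounded_linear)
    have normM: "norm (M x) \<le> Mop * norm x" for x unfolding Mop_def AoptM by (rule onorm[OF blM])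
    have Mop_nn: "0 \<le> Mop" unfolding Mop_def AoptM by (rule onorm_pos_le[OF blM])
    have dMd: "d \<bullet> M d \<le> Mop * (norm d)^2"
    proof -
      have "d \<bullet> M d \<le> norm d * norm (M d)" by (rule norm_cauchy_schwarz)
      also have "\<dots> \<le> norm d * (Mop * norm d)" using normM[of d] by (intro mult_left_mono) auto
      finally show ?thesis by (simp add: power2_eq_square algebra_simps)
    qed
    have psdM: "\<And>x. x \<in> UNIV \<Longrightarrow> 0 \<le> x \<bullet> M x"
      using loM apos by (meson inner_ge_zero mult_nonneg_nonneg order_trans less_imp_le)
    have eMe_nn: "0 \<le> e \<bullet> M e" using psdM by simp
    have MeMe: "(norm (M e))^2 \<le> Mop * (e \<bullet> M e)"
    proof (cases "M e = 0")
      case True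
      then show ?thesis using Mop_nn eMe_nn by simp
    next
      case False
      have cs: "(e \<bullet> M (M e))^2 \<le> (e \<bullet> M e) * (M e \<bullet> M (M e))"
        by (rule psd_cs[OF linM symM subspace_UNIV psdM]) auto
      have e1: "e \<bullet> M (M e) = (norm (M e))^2" using symM[of e "M e"] by (simp add: power2_norm_eq_inner)
      have e2: "M e \<bullet> M (M e) \<le> Mop * (norm (M e))^2"
      proof -
        have "M e \<bullet> M (M e) \<le> norm (M e) * norm (M (M e))" by (rule norm_cauchy_schwarz)
        also have "\<dots> \<le> norm (M e) * (Mop * norm (M e))" using normM[of "M e"] by (intro mult_left_mono) auto
        finally show ?thesis by (simp add: power2_eq_square algebra_simps)
      qed
      have "((norm (M e))^2)^2 \<le> (e \<bullet> M e) * (Mop * (norm (M e))^2)"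
        using cs e1 e2 eMe_nn by (metis mult_left_mono order_trans)
      then have "(norm (M e))^2 * (norm (M e))^2 \<le> (Mop * (e \<bullet> M e)) * (norm (M e))^2"
        by (simp add: power2_eq_square algebra_simps)
      moreover have "0 < (norm (M e))^2" using False by simp
      ultimately show ?thesis using mult_le_cancel_right_pos by blast
    qed
    have Me_r: "M e = r + (lopt - lk) *\<^sub>R xk"
    proof -
      have "M e = M xk - M xopt" unfolding e_def by (rule linear_diff[OF linM])
      also have "\<dots> = A *v xk + lopt *\<^sub>R xk + g" unfolding Mxopt by (simp add: Me)
      also have "\<dots> = r + (lopt - lk) *\<^sub>R xk" by (simp add: r_def algebra_simps)
      finally show ?thesis .
    qed
    have r_Me: "(norm r)^2 \<le> (norm (M e))^2"
    proof -
      have "orthogonal r ((lopt - lk) *\<^sub>R xk)"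
        using r_K[OF xk_K] by (simp add: orthogonal_def inner_commute)
      then have "(norm (M e))^2 = (norm r)^2 + (norm ((lopt - lk) *\<^sub>R xk))^2"
        unfolding Me_r by (rule norm_add_Pythagorean)
      then show ?thesis by simp
    qed
    have "(norm r)^2 \<le> Mop * (Mop * (norm d)^2)"
    proof -
      have "Mop * (e \<bullet> M e) \<le> Mop * (Mop * (norm d)^2)"
        using eMe dMd Mop_nn by (meson order_trans mult_left_mono)
      then show ?thesis using r_Me MeMe by linarith
    qed
    also have "\<dots> \<le> Mop * (Mop * ((2 * \<rho> ^ k)^2 * (\<Delta>^2 + \<epsilon>^2)))"
      using zxb Mop_nn unfolding d_def by (intro mult_left_mono) auto
    also have "\<dots> = (2 * (Mop * sqrt (\<Delta>^2 + \<epsilon>^2) * \<rho> ^ k))^2"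
      by (simp add: power_mult_distrib power2_eq_square)
    finally have "(norm r)^2 \<le> (2 * (Mop * sqrt (\<Delta>^2 + \<epsilon>^2) * \<rho> ^ k))^2" .
    then have "norm r \<le> 2 * (Mop * sqrt (\<Delta>^2 + \<epsilon>^2) * \<rho> ^ k)"
      by (rule power2_le_imp_le) (simp add: Mop_nn rho_nn)
    then show ?thesis unfolding Mop_def \<epsilon>_def y_def P_def \<rho>_def a_def b_def .
  qed
  show ?thesis unfolding Let_def using B1part B2part by (simp add: r_def)
qed

end
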